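(* Let $k\ge1$ be the cache size and $H_k=\sum_{j=1}^k 1/j$. In both the discard-predictions setup and the phase-predictions setup, there is no (possibly randomized) online paging algorithm that is $(\alpha,\beta,\gamma)$-competitive with either $\alpha+\beta<H_k$ or $\alpha+(k-1)\gamma<H_k$.
   Context: Paging: there is a universe $U$ of pages and a cache holding at most $k$ pages. Requests $r_1,\dots,r_n\in U$ arrive online. If the requested page is not in the cache (a page fault), it must be loaded, evicting a cached page if the cache holds $k$ pages. The cost is the number of page faults; $\mathrm{OPT}(I)$ is the minimum offline cost on request sequence $I$. Along with each request $r_i$ the online algorithm receives a prediction bit $p_i\in\{0,1\}$ (which may be arbitrary). An algorithm is $(\alpha,\beta,\gamma)$-competitive (with $\alpha,\beta,\gamma\ge0$) if there is a constant $b$ (possibly depending on $k$) such that for every instance $I$ and all predictions $p$, $\mathbb{E}[\mathrm{ALG}(I,p)]\le \alpha\,\mathrm{OPT}(I)+\beta\,\eta_0+\gamma\,\eta_1+b$, the expectation being over the algorithm's randomness. Discard-predictions setup: fix the optimal offline algorithm LFD (on a fault with full cache, evict a cached page never requested again if one exists, otherwise the cached page whose next request is furthest in the future; ties broken by a fixed rule). Ground truth: $p_i^*=0$ if LFD keeps $r_i$ in cache until its next request (or to the end if none), $p_i^*=1$ if LFD evicts $r_i$ before it is requested again. Errors: $\eta_h=|\{i\in[n]: p_i=h,\ p_i^*=1-h\}|$. Phase-predictions setup: partition the requests into $k$-phases (the first starts at $r_1$; each phase is a maximal contiguous segment with at most $k$ distinct pages; the next starts right after). For $r_i$ in phase $j$: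 $p_i^*=0$ if page $r_i$ is requested in phase $j+1$, else $p_i^*=1$. Errors: $\eta_h$ = number of counted requests $i$ with $p_i=h$, $p_i^*=1-h$, where counted requests are, for each non-last phase $j$ and each page requested in phase $j$, only the last request to that page within phase $j$. *)

theory Defs
  imports "HOL-Probability.Probability"
begin

text \<open>A run of a paging algorithm is recorded as a list of pairs (request, cache content after
serving that request). The cache starts empty.\<close>

fun fault_count :: "'p set \<Rightarrow> ('p \<times> 'p set) list \<Rightarrow> nat" where
  "fault_count C [] = 0"
| "fault_count C ((r, C') # xs) = (if r \<in> C then 0 else 1) + fault_count C' xs"

fun valid_run :: "nat \<Rightarrow> 'p set \<Rightarrow> ('p \<times> 'p set) list \<Rightarrow> bool" where
  "valid_run k C [] = True"
| "valid_run k C ((r, C') # xs) =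
     (r \<in> C' \<and> finite C' \<and> card C' \<le> k \<and> C' \<subseteq> insert r C \<and> valid_run k C' xs)"

definition opt :: "nat \<Rightarrow> 'p list \<Rightarrow> nat" where
  "opt k I = (LEAST c. \<exists>cs. length cs = length I \<and> valid_run k {} (zip I cs)
                          \<and> c = fault_count {} (zip I cs))"

text \<open>A (behavioural) randomized online algorithm: given the history (past requests with their
prediction bits and the caches chosen) and the current request with its prediction bit,
it returns a distribution over the new cache content. Prediction bits are booleans,
True = 1, False = 0.\<close>

type_synonym 'p history = "(('p \<times> bool) \<times> 'p set) list"
type_synonym 'p ralg = "'p history \<Rightarrow> ('p \<times> bool) \<Rightarrow> 'p set pmf"

definition last_cache :: "'p history \<Rightarrow> 'p set" where
  "last_cache h = (if h = [] then {} else snd (last h))"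

definition valid_alg :: "nat \<Rightarrow> 'p ralg \<Rightarrow> bool" where
  "valid_alg k R \<longleftrightarrow> (\<forall>h x C. C \<in> set_pmf (R h x) \<longrightarrow>
      fst x \<in> C \<and> finite C \<and> card C \<le> k \<and> C \<subseteq> insert (fst x) (last_cache h))"

primrec run_alg :: "'p ralg \<Rightarrow> 'p history \<Rightarrow> ('p \<times> bool) list \<Rightarrow> 'p history pmf" where
  "run_alg R h [] = return_pmf h"
| "run_alg R h (x # xs) = bind_pmf (R h x) (\<lambda>C. run_alg R (h @ [(x, C)]) xs)"

definition hist_faults :: "'p history \<Rightarrow> nat" where
  "hist_faults h = fault_count {} (map (\<lambda>(x, C). (fst x, C)) h)"

definition alg_cost :: "'p ralg \<Rightarrow> ('p \<times> bool) list \<Rightarrow> real" where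
  "alg_cost R xs = measure_pmf.expectation (run_alg R [] xs) (\<lambda>h. real (hist_faults h))"

text \<open>(alpha, beta, gamma)-competitiveness w.r.t. an error measure eta, where
eta xs False = eta_0 and eta xs True = eta_1.\<close>
definition competitive ::
  "nat \<Rightarrow> (('p \<times> bool) list \<Rightarrow> bool \<Rightarrow> nat) \<Rightarrow> 'p ralg \<Rightarrow> real \<Rightarrow> real \<Rightarrow> real \<Rightarrow> bool" where
  "competitive k eta R \<alpha> \<beta> \<gamma> \<longleftrightarrow> \<alpha> \<ge> 0 \<and> \<beta> \<ge> 0 \<and> \<gamma> \<ge> 0 \<and>
     (\<exists>b::real. \<forall>xs. alg_cost R xs \<le> \<alpha> * real (opt k (map fst xs))
                    + \<beta> * real (eta xs False) + \<gamma> * real (eta xs True) + b)"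

definition next_req :: "'p list \<Rightarrow> nat \<Rightarrow> 'p \<Rightarrow> nat" where
  "next_req I i q = (LEAST j. i < j \<and> j < length I \<and> I ! j = q)"

definition next_or_end :: "'p list \<Rightarrow> nat \<Rightarrow> nat" where
  "next_or_end I i = (if \<exists>j. i < j \<and> j < length I \<and> I ! j = I ! i
                       then next_req I i (I ! i) else length I)"

text \<open>A tie-breaking rule: tie I i F picks the page to evict among the set F of cached pages never
requested again, at step i of sequence I.\<close>
definition valid_tie :: "('p list \<Rightarrow> nat \<Rightarrow> 'p set \<Rightarrow> 'p) \<Rightarrow> bool" where
  "valid_tie tie \<longleftrightarrow> (\<forall>I i F. finite F \<and> F \<noteq> {} \<longrightarrow> tie I i F \<in> F)"

definition lfd_step :: "nat \<Rightarrow> ('p list \<Rightarrow> nat \<Rightarrow> 'p set \<Rightarrow> 'p) \<Rightarrow> 'p list \<Rightarrow> nat \<Rightarrow> 'p set \<Rightarrow> 'p set" where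
  "lfd_step k tie I i C =
     (let r = I ! i in
      if r \<in> C then C
      else if card C < k then insert r C
      else let F = {q \<in> C. q \<notin> set (drop (Suc i) I)};
               v = (if F \<noteq> {} then tie I i F else arg_max_on (next_req I i) C)
           in insert r (C - {v}))"

text \<open>lfd_cache k tie I i = LFD's cache before serving request i (i.e. after requests 0..i-1).\<close>
primrec lfd_cache :: "nat \<Rightarrow> ('p list \<Rightarrow> nat \<Rightarrow> 'p set \<Rightarrow> 'p) \<Rightarrow> 'p list \<Rightarrow> nat \<Rightarrow> 'p set" where
  "lfd_cache k tie I 0 = {}"
| "lfd_cache k tie I (Suc i) = lfd_step k tie I i (lfd_cache k tie I i)"

text \<open>Ground truth (True = 1): LFD evicts r_i before its next request (or the end).\<close>
definition discard_pstar :: "nat \<Rightarrow> ('p list \<Rightarrow> nat \<Rightarrow> 'p set \<Rightarrow> 'p) \<Rightarrow> 'p list \<Rightarrow> nat \<Rightarrow> bool" where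
  "discard_pstar k tie I i \<longleftrightarrow>
     (\<exists>j. i < j \<and> j \<le> next_or_end I i \<and> I ! i \<notin> lfd_cache k tie I j)"

definition discard_eta :: "nat \<Rightarrow> ('p list \<Rightarrow> nat \<Rightarrow> 'p set \<Rightarrow> 'p) \<Rightarrow> ('p \<times> bool) list \<Rightarrow> bool \<Rightarrow> nat" where
  "discard_eta k tie xs h = card {i. i < length xs \<and> snd (xs ! i) = h
                                   \<and> discard_pstar k tie (map fst xs) i = (\<not> h)}"

text \<open>phase_ids k S j rs: phase indices of the requests rs, where the current phase has index j
and has so far seen the distinct pages S.\<close>
fun phase_ids :: "nat \<Rightarrow> 'p set \<Rightarrow> nat \<Rightarrow> 'p list \<Rightarrow> nat list" where
  "phase_ids k S j [] = []"
| "phase_ids k S j (r # rs) =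
     (if r \<in> S \<or> card S < k then j # phase_ids k (insert r S) j rs
      else Suc j # phase_ids k {r} (Suc j) rs)"

definition phase :: "nat \<Rightarrow> 'p list \<Rightarrow> nat \<Rightarrow> nat" where
  "phase k I i = phase_ids k {} 0 I ! i"

definition phase_pstar :: "nat \<Rightarrow> 'p list \<Rightarrow> nat \<Rightarrow> bool" where
  "phase_pstar k I i \<longleftrightarrow>
     \<not> (\<exists>i'<length I. phase k I i' = Suc (phase k I i) \<and> I ! i' = I ! i)"

definition counted :: "nat \<Rightarrow> 'p list \<Rightarrow> nat \<Rightarrow> bool" where
  "counted k I i \<longleftrightarrow> i < length I \<and> (\<exists>i'<length I. phase k I i < phase k I i')
     \<and> \<not> (\<exists>i'. i < i' \<and> i' < length I \<and> phase k I i' = phase k I i \<and> I ! i' = I ! i)"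

definition phase_eta :: "nat \<Rightarrow> ('p \<times> bool) list \<Rightarrow> bool \<Rightarrow> nat" where
  "phase_eta k xs h = card {i. counted k (map fst xs) i \<and> snd (xs ! i) = h
                              \<and> phase_pstar k (map fst xs) i = (\<not> h)}"

end

theory Submission
  imports Defs
begin

lemma pmf_integral_bind:
  fixes f :: "_ \<Rightarrow> real"
  assumes "\<And>x. \<bar>f x\<bar> \<le> B"
  shows "measure_pmf.expectation (bind_pmf M N) f = measure_pmf.expectation M (\<lambda>x. measure_pmf.expectation (N x) f)"
  unfolding measure_pmf_bind
  apply (rule integral_bind[where K="count_space UNIV" and B=B and B'=1])
  using assms by (auto simp: measure_pmf.emeasure_space_1 measure_pmf_in_subprob_algebra prob_space_imp_subprob_space)

lemma integrable_pmf_bounded: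
  fixes f :: "_ \<Rightarrow> real"
  assumes "\<And>x. x \<in> set_pmf M \<Longrightarrow> \<bar>f x\<bar> \<le> B"
  shows "integrable (measure_pmf M) f"
  by (rule measure_pmf.integrable_const_bound[where B=B]) (auto intro!: AE_pmfI assms)

lemma pmf_integral_bind':
  fixes f :: "_ \<Rightarrow> real"
  assumes "\<And>x. x \<in> set_pmf (bind_pmf M N) \<Longrightarrow> \<bar>f x\<bar> \<le> B"
  shows "measure_pmf.expectation (bind_pmf M N) f = measure_pmf.expectation M (\<lambda>x. measure_pmf.expectation (N x) f)"
proof -
  define g where "g = (\<lambda>x. max (- \<bar>B\<bar>) (min \<bar>B\<bar> (f x)))"
  have gf: "g y = f y" if "y \<in> set_pmf (bind_pmf M N)" for y
    using assms[OF that] by (auto simp: g_def)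
  have "measure_pmf.expectation (bind_pmf M N) f = measure_pmf.expectation (bind_pmf M N) g"
    by (rule integral_cong_AE) (auto intro!: AE_pmfI simp: gf)
  also have "\<dots> = measure_pmf.expectation M (\<lambda>x. measure_pmf.expectation (N x) g)"
    by (rule pmf_integral_bind[where B="\<bar>B\<bar>"]) (auto simp: g_def)
  also have "\<dots> = measure_pmf.expectation M (\<lambda>x. measure_pmf.expectation (N x) f)"
  proof (rule integral_cong_AE)
    show "AE x in measure_pmf M. measure_pmf.expectation (N x) g = measure_pmf.expectation (N x) f"
    proof (rule AE_pmfI)
      fix x assume x: "x \<in> set_pmf M"
      show "measure_pmf.expectation (N x) g = measure_pmf.expectation (N x) f"
        using x by (intro integral_cong_AE) (auto intro!: AE_pmfI gf)
    qed
  qed auto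
  finally show ?thesis .
qed

lemma pmf_exp_mono:
  fixes f g :: "_ \<Rightarrow> real"
  assumes "integrable (measure_pmf M) f" "integrable (measure_pmf M) g"
    "\<And>x. x \<in> set_pmf M \<Longrightarrow> f x \<le> g x"
  shows "measure_pmf.expectation M f \<le> measure_pmf.expectation M g"
  by (rule integral_mono_AE) (auto intro!: AE_pmfI assms)

lemma pmf_exp_ge_const:
  fixes f :: "_ \<Rightarrow> real"
  assumes "integrable (measure_pmf M) f" "\<And>x. x \<in> set_pmf M \<Longrightarrow> c \<le> f x"
  shows "c \<le> measure_pmf.expectation M f"
proof -
  have "measure_pmf.expectation M (\<lambda>_. c) \<le> measure_pmf.expectation M f"
    by (rule pmf_exp_mono) (auto simp: assms)
  then show ?thesis by simp
qed

definition lc :: "'p set \<Rightarrow> ('p \<times> 'p set) list \<Rightarrow> 'p set" where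
  "lc C ps = (if ps = [] then C else snd (last ps))"

lemma fault_count_append:
  "fault_count C (xs @ ys) = fault_count C xs + fault_count (lc C xs) ys"
  by (induction C xs rule: fault_count.induct) (auto simp: lc_def)

lemma fault_count_le: "fault_count C xs \<le> length xs"
  by (induction C xs rule: fault_count.induct) auto

abbreviation pg :: "(('p \<times> bool) \<times> 'p set) list \<Rightarrow> ('p \<times> 'p set) list" where
  "pg \<equiv> map (\<lambda>(x, C). (fst x, C))"

lemma lc_pg: "lc {} (pg h) = last_cache h"
  by (cases h rule: rev_cases) (auto simp: lc_def last_cache_def split: prod.splits)

lemma lc_pg_append: "lc (last_cache h) (pg h2) = last_cache (h @ h2)"
  by (cases h2 rule: rev_cases) (auto simp: lc_def last_cache_def split: prod.splits)

lemma hist_faults_append: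
  "hist_faults (h @ h2) = hist_faults h + fault_count (last_cache h) (pg h2)"
  unfolding hist_faults_def by (simp add: fault_count_append lc_pg)

lemma hist_faults_le: "hist_faults h \<le> length h"
  unfolding hist_faults_def using fault_count_le by (metis length_map)

lemma run_alg_append:
  "run_alg R h (xs @ ys) = bind_pmf (run_alg R h xs) (\<lambda>h'. run_alg R h' ys)"
  by (induction xs arbitrary: h) (auto simp: bind_return_pmf bind_assoc_pmf)

lemma run_alg_support:
  assumes "valid_alg k R" "h' \<in> set_pmf (run_alg R h xs)"
  shows "\<exists>h2. h' = h @ h2 \<and> map fst h2 = xs \<and> valid_run k (last_cache h) (pg h2)"
  using assms(2)
proof (induction xs arbitrary: h)
  case Nil then show ?case by simp
next
  case (Cons x xs)
  then obtain C where C: "C \<in> set_pmf (R h x)"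
    and h': "h' \<in> set_pmf (run_alg R (h @ [(x, C)]) xs)" by auto
  from Cons.IH[OF h'] obtain h3 where h3: "h' = (h @ [(x,C)]) @ h3" "map fst h3 = xs"
    "valid_run k (last_cache (h@[(x,C)])) (pg h3)" by blast
  have lc: "last_cache (h @ [(x,C)]) = C" by (simp add: last_cache_def)
  from assms(1) C have "fst x \<in> C \<and> finite C \<and> card C \<le> k \<and> C \<subseteq> insert (fst x) (last_cache h)"
    by (cases x) (force simp: valid_alg_def)
  with h3 lc show ?case by (intro exI[of _ "(x,C) # h3"]) auto
qed

lemma run_alg_length:
  assumes "h' \<in> set_pmf (run_alg R h xs)"
  shows "length h' = length h + length xs"
  using assms by (induction xs arbitrary: h) auto

lemma valid_run_faults_ge:
  "valid_run k C ps \<Longrightarrow> card (set (map fst ps) - C) \<le> fault_count C ps"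
proof (induction ps arbitrary: C)
  case Nil then show ?case by simp
next
  case (Cons p ps)
  obtain r C' where p: "p = (r, C')" by (cases p)
  with Cons.prems have v: "C' \<subseteq> insert r C" "valid_run k C' ps" by auto
  have sub: "set (map fst (p # ps)) - C \<subseteq> (set (map fst ps) - C') \<union> ({r} - C)"
    unfolding p using v(1) by auto
  have "card (set (map fst (p # ps)) - C) \<le> card ((set (map fst ps) - C') \<union> ({r} - C))"
    by (rule card_mono[OF _ sub]) auto
  also have "\<dots> \<le> card (set (map fst ps) - C') + card ({r} - C)" by (rule card_Un_le)
  also have "\<dots> \<le> fault_count C' ps + card ({r} - C)" using Cons.IH[OF v(2)] by simp
  also have "\<dots> = fault_count C (p # ps)" by (cases "r \<in> C") (auto simp: p Diff_eq_empty_iff[THEN iffD2] insert_Diff_if)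
  finally show ?case .
qed

lemma valid_run_lc_sub:
  "valid_run k C ps \<Longrightarrow> lc C ps \<subseteq> C \<union> set (map fst ps)"
proof (induction ps arbitrary: C)
  case Nil then show ?case by (simp add: lc_def)
next
  case (Cons p ps)
  obtain r C' where p: "p = (r, C')" by (cases p)
  with Cons.prems have v: "C' \<subseteq> insert r C" "valid_run k C' ps" by auto
  have "lc C (p # ps) = lc C' ps" by (cases ps) (auto simp: lc_def p)
  with Cons.IH[OF v(2)] v(1) p show ?case by auto
qed

definition Phi :: "'p set \<Rightarrow> 'p set \<Rightarrow> real" where
  "Phi U C = max (-1) (min 0 ((real (card U) - 1 - real (card (C \<inter> U))) / real (card U)))"

lemma Phi_bounds: "-1 \<le> Phi U C" "Phi U C \<le> 0"
  by (auto simp: Phi_def)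

lemma path_bound:
  assumes v: "valid_run k C0 ((x, C1) # ps)"
    and M: "set (map fst ps) = M" and U: "U \<inter> M = {}" "finite U" "finite M"
    and card: "card U + card M = Suc k" and x: "x \<in> M" and cU: "card U \<ge> 1"
  shows "(if x \<in> C0 then 0 else 1) \<le> real (fault_count C0 ((x, C1) # ps)) + Phi U (lc C1 ps)"
proof -
  from v have C1: "finite C1" "card C1 \<le> k" "valid_run k C1 ps" by auto
  define f where "f = fault_count C1 ps"
  define a where "a = card (lc C1 ps \<inter> U)"
  have f1: "card (M - C1) \<le> f" unfolding f_def using valid_run_faults_ge[OF C1(3)] M by simp
  have "lc C1 ps \<inter> U \<subseteq> C1 \<inter> U" using valid_run_lc_sub[OF C1(3)] M U(1) by auto
  then have a1: "a \<le> card (C1 \<inter> U)" unfolding a_def by (intro card_mono) (auto simp: C1)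
  have "card (C1 \<inter> U) + card (C1 \<inter> M) = card ((C1 \<inter> U) \<union> (C1 \<inter> M))"
    by (rule card_Un_disjoint[symmetric]) (use U C1 in auto)
  also have "\<dots> \<le> card C1" by (rule card_mono) (auto simp: C1)
  finally have a2: "card (C1 \<inter> U) + card (C1 \<inter> M) \<le> k" using C1 by simp
  have "card M = card ((M - C1) \<union> (M \<inter> C1))" by (metis Diff_partition Int_lower1 Un_commute Un_Diff_Int)
  also have "\<dots> = card (M - C1) + card (M \<inter> C1)" by (rule card_Un_disjoint) (use U in auto)
  finally have "card (M - C1) + card (C1 \<inter> M) = card M" by (simp add: Int_commute)
  then have key: "a + 1 \<le> card U + f" using a1 a2 f1 card by linarith
  have "(real (card U) - 1 - real a) / real (card U) \<ge> - real f"
  proof -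
    have "real (card U) - 1 - real a \<ge> - real f" using key by linarith
    also have "- real f \<ge> - real f * real (card U)" using cU by (simp add: mult_le_cancel_left1)
    finally have "real (card U) - 1 - real a \<ge> - real f * real (card U)" .
    then show ?thesis using cU by (simp add: field_simps)
  qed
  then have "Phi U (lc C1 ps) \<ge> - real f"
    unfolding Phi_def a_def[symmetric] by (auto simp: max_def min_def)
  moreover have "fault_count C0 ((x, C1) # ps) = (if x \<in> C0 then 0 else 1) + f"
    by (simp add: f_def)
  ultimately show ?thesis by (auto split: if_splits)
qed

fun gen :: "nat \<Rightarrow> bool \<Rightarrow> 'p list \<Rightarrow> 'p list \<Rightarrow> ('p \<times> bool) list" where
  "gen k m ys [] = []"
| "gen k m ys (x # cs) = ((x, False) # map (\<lambda>y. (y, m \<and> Suc (length ys) = k)) (ys @ [x]))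
      @ gen k m (if Suc (length ys) = k then [] else ys @ [x]) cs"

definition cands :: "'p set \<Rightarrow> 'p set \<Rightarrow> 'p list \<Rightarrow> 'p set" where
  "cands P S ys = (if ys = [] then P - S else P - set ys)"

fun vc :: "nat \<Rightarrow> 'p set \<Rightarrow> 'p set \<Rightarrow> 'p list \<Rightarrow> 'p list \<Rightarrow> bool" where
  "vc k P S ys [] = True"
| "vc k P S ys (x # cs) = (x \<in> cands P S ys \<and>
     (if Suc (length ys) = k then vc k P (set (ys @ [x])) [] cs else vc k P S (ys @ [x]) cs))"

definition uu :: "nat \<Rightarrow> nat \<Rightarrow> real" where
  "uu k l = (if l = 0 then 1 else real (Suc k - l))"

fun F :: "nat \<Rightarrow> nat \<Rightarrow> nat \<Rightarrow> real" where
  "F k l 0 = 0"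
| "F k l (Suc n) = 1 / uu k l + F k (if Suc l = k then 0 else Suc l) n"

definition EQ :: "'p ralg \<Rightarrow> ('p \<times> bool) list \<Rightarrow> 'p set \<Rightarrow> real" where
  "EQ R w U = measure_pmf.expectation (run_alg R [] w) (\<lambda>h. real (hist_faults h) + Phi U (last_cache h))"

lemma bound_run:
  assumes "h \<in> set_pmf (run_alg R [] w)"
  shows "real (hist_faults h) \<le> real (length w)"
  using run_alg_length[OF assms] hist_faults_le[of h] by simp

lemma int_hf: "integrable (measure_pmf (run_alg R [] w)) (\<lambda>h. real (hist_faults h))"
  by (rule integrable_pmf_bounded[where B="real (length w)"]) (auto dest: bound_run)

lemma int_Q: "integrable (measure_pmf (run_alg R [] w)) (\<lambda>h. real (hist_faults h) + Phi U (last_cache h))"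
proof (rule integrable_pmf_bounded[where B="real (length w) + 1"])
  fix h assume "h \<in> set_pmf (run_alg R [] w)"
  from bound_run[OF this] Phi_bounds[of U "last_cache h"]
  show "\<bar>real (hist_faults h) + Phi U (last_cache h)\<bar> \<le> real (length w) + 1" by linarith
qed


lemma map_fst_pg: "map fst (pg h) = map fst (map fst h)"
  by (induction h) auto

lemma step_inner:
  fixes b :: bool
  assumes R: "valid_alg k R" and P: "finite P" "card P = Suc k"
    and ys: "distinct (ys @ [x])" "set (ys @ [x]) \<subseteq> P" "length ys < k"
    and h: "h \<in> set_pmf (run_alg R [] w)"
  defines "out \<equiv> (x, False) # map (\<lambda>y. (y, b)) (ys @ [x])"
  shows "real (hist_faults h) + (if x \<in> last_cache h then 0 else 1)
     \<le> measure_pmf.expectation (run_alg R h out) (\<lambda>h'. real (hist_faults h') + Phi (P - set (ys @ [x])) (last_cache h'))"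
proof (rule pmf_exp_ge_const)
  show "integrable (measure_pmf (run_alg R h out)) (\<lambda>h'. real (hist_faults h') + Phi (P - set (ys @ [x])) (last_cache h'))"
  proof (rule integrable_pmf_bounded[where B="real (length h + length out) + 1"])
    fix h' assume h': "h' \<in> set_pmf (run_alg R h out)"
    from run_alg_length[OF h'] hist_faults_le[of h'] Phi_bounds[of "P - set (ys @ [x])" "last_cache h'"]
    show "\<bar>real (hist_faults h') + Phi (P - set (ys @ [x])) (last_cache h')\<bar> \<le> real (length h + length out) + 1"
      by (simp add: abs_le_iff)
  qed
next
  fix h' assume h': "h' \<in> set_pmf (run_alg R h out)"
  from run_alg_support[OF R h'] obtain h2 where h2: "h' = h @ h2" "map fst h2 = out"
    "valid_run k (last_cache h) (pg h2)" by blast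
  from h2(2) obtain C1 h3 where h3: "h2 = ((x, False), C1) # h3" "map fst h3 = map (\<lambda>y. (y, b)) (ys @ [x])"
    unfolding out_def by (cases h2) auto
  define M where "M = set (ys @ [x])"
  have pgh2: "pg h2 = (x, C1) # pg h3" using h3 by simp
  have mf: "set (map fst (pg h3)) = M" unfolding map_fst_pg h3(2) M_def by (simp add: o_def)
  have finM: "finite M" unfolding M_def by simp
  have cM: "card M = Suc (length ys)" unfolding M_def using distinct_card[OF ys(1)] by simp
  have MP: "M \<subseteq> P" using ys(2) M_def by simp
  have cU: "card (P - M) + card M = Suc k"
    using card_Diff_subset[OF finM MP] card_mono[OF P(1) MP] P(2) by simp
  have cU1: "card (P - M) \<ge> 1" using cU cM ys(3) by simp
  have pb: "(if x \<in> last_cache h then 0 else 1) \<le> real (fault_count (last_cache h) ((x, C1) # pg h3)) + Phi (P - M) (lc C1 (pg h3))"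
    by (rule path_bound[OF _ mf]) (use h2(3) pgh2 P(1) finM cU cU1 in \<open>auto simp: M_def\<close>)
  have lc1: "last_cache (h @ h2) = lc C1 (pg h3)"
    using lc_pg_append[of h h2] h2(1) pgh2 by (simp add: lc_def split: if_splits)
  show "real (hist_faults h) + (if x \<in> last_cache h then 0 else 1) \<le> real (hist_faults h') + Phi (P - set (ys @ [x])) (last_cache h')"
    using pb unfolding h2(1) hist_faults_append lc1 pgh2[symmetric] M_def by simp
qed


lemma pmf_exp_abs_bound:
  fixes f :: "_ \<Rightarrow> real"
  assumes "\<And>x. x \<in> set_pmf M \<Longrightarrow> \<bar>f x\<bar> \<le> B"
  shows "\<bar>measure_pmf.expectation M f\<bar> \<le> B"
proof -
  have i: "integrable (measure_pmf M) f" by (rule integrable_pmf_bounded[OF assms])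
  have "- B \<le> measure_pmf.expectation M f"
    by (rule pmf_exp_ge_const[OF i]) (use assms in \<open>force simp: abs_le_iff\<close>)
  moreover have "measure_pmf.expectation M f \<le> measure_pmf.expectation M (\<lambda>_. B)"
    by (rule pmf_exp_mono[OF i]) (use assms in \<open>force simp: abs_le_iff\<close>)+
  ultimately show ?thesis by simp
qed

lemma EQ_append_ge:
  fixes b :: bool
  assumes R: "valid_alg k R" and P: "finite P" "card P = Suc k"
    and ys: "distinct (ys @ [x])" "set (ys @ [x]) \<subseteq> P" "length ys < k"
  shows "measure_pmf.expectation (run_alg R [] w) (\<lambda>h. real (hist_faults h) + (if x \<in> last_cache h then 0 else 1))
     \<le> EQ R (w @ ((x, False) # map (\<lambda>y. (y, b)) (ys @ [x]))) (P - set (ys @ [x]))"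
proof -
  define out where "out = (x, False) # map (\<lambda>y. (y, b)) (ys @ [x])"
  define Q where "Q = (\<lambda>h'. real (hist_faults h') + Phi (P - set (ys @ [x])) (last_cache h'))"
  have "EQ R (w @ out) (P - set (ys @ [x])) = measure_pmf.expectation (run_alg R [] w)
          (\<lambda>h. measure_pmf.expectation (run_alg R h out) Q)"
    unfolding EQ_def run_alg_append Q_def
  proof (rule pmf_integral_bind'[where B="real (length (w @ out)) + 1"])
    fix h' assume "h' \<in> set_pmf (run_alg R [] w \<bind> (\<lambda>h'. run_alg R h' out))"
    then have "h' \<in> set_pmf (run_alg R [] (w @ out))" by (simp add: run_alg_append)
    from bound_run[OF this] Phi_bounds[of "P - set (ys @ [x])" "last_cache h'"]
    show "\<bar>real (hist_faults h') + Phi (P - set (ys @ [x])) (last_cache h')\<bar> \<le> real (length (w @ out)) + 1"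
      by (simp add: abs_le_iff)
  qed
  also have "measure_pmf.expectation (run_alg R [] w) (\<lambda>h. real (hist_faults h) + (if x \<in> last_cache h then 0 else 1))
      \<le> measure_pmf.expectation (run_alg R [] w) (\<lambda>h. measure_pmf.expectation (run_alg R h out) Q)"
  proof (rule pmf_exp_mono)
    show "integrable (measure_pmf (run_alg R [] w)) (\<lambda>h. real (hist_faults h) + (if x \<in> last_cache h then 0 else 1))"
      by (rule integrable_pmf_bounded[where B="real (length w) + 1"]) (auto dest!: bound_run)
    show "integrable (measure_pmf (run_alg R [] w)) (\<lambda>h. measure_pmf.expectation (run_alg R h out) Q)"
    proof (rule integrable_pmf_bounded[where B="real (length (w @ out)) + 1"])
      fix h assume h: "h \<in> set_pmf (run_alg R [] w)"
      have "\<bar>Q h'\<bar> \<le> real (length (w @ out)) + 1" if "h' \<in> set_pmf (run_alg R h out)" for h'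
      proof -
        have "h' \<in> set_pmf (run_alg R [] (w @ out))" using h that by (auto simp: run_alg_append)
        from bound_run[OF this] Phi_bounds[of "P - set (ys @ [x])" "last_cache h'"]
        show ?thesis by (simp add: abs_le_iff Q_def)
      qed
      then show "\<bar>measure_pmf.expectation (run_alg R h out) Q\<bar> \<le> real (length (w @ out)) + 1" by (rule pmf_exp_abs_bound)
    qed
    fix h assume h: "h \<in> set_pmf (run_alg R [] w)"
    show "real (hist_faults h) + (if x \<in> last_cache h then 0 else 1) \<le> measure_pmf.expectation (run_alg R h out) Q"
      unfolding Q_def out_def by (rule step_inner[OF R P ys h])
  qed
  finally show ?thesis unfolding out_def .
qed


lemma Phi_le:
  assumes "finite U" "card U \<ge> 1"
  shows "real (card U) * Phi U C + 1 \<le> real (card (U - C))"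
proof -
  define u where "u = real (card U)"
  define a where "a = real (card (C \<inter> U))"
  have au: "a \<le> u" unfolding a_def u_def using assms by (intro of_nat_mono card_mono) auto
  have u1: "u \<ge> 1" using assms u_def by simp
  have t: "(u - 1 - a) / u \<ge> -1" using au u1 by (simp add: field_simps)
  have "Phi U C \<le> (u - 1 - a) / u" unfolding Phi_def u_def[symmetric] a_def[symmetric] using t by simp
  then have "u * Phi U C \<le> u - 1 - a" using u1 by (simp add: field_simps)
  moreover have "real (card (U - C)) = u - a"
    unfolding u_def a_def using assms card_Diff_subset_Int[of U C] card_mono[of U "U \<inter> C"]
    by (simp add: Int_commute of_nat_diff)
  ultimately show ?thesis unfolding u_def by linarith
qed

lemma sum_ind: "finite U \<Longrightarrow> (\<Sum>x\<in>U. (if x \<in> C then 0 else 1::real)) = real (card (U - C))"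
  by (simp add: sum.If_cases Diff_eq)

lemma avg_step:
  assumes U: "finite U" "card U \<ge> 1"
    and ge: "\<And>x. x \<in> U \<Longrightarrow> measure_pmf.expectation (run_alg R [] w) (\<lambda>h. real (hist_faults h) + (if x \<in> last_cache h then 0 else 1)) \<le> g x"
  shows "\<exists>x\<in>U. EQ R w U + 1 / real (card U) \<le> g x"
proof (rule ccontr)
  assume "\<not> ?thesis"
  then have lt: "\<And>x. x \<in> U \<Longrightarrow> g x < EQ R w U + 1 / real (card U)" by auto
  let ?E = "measure_pmf.expectation (run_alg R [] w)"
  have int1: "integrable (measure_pmf (run_alg R [] w)) (\<lambda>h. real (hist_faults h) + (if x \<in> last_cache h then 0 else 1))" for x
    by (rule integrable_pmf_bounded[where B="real (length w) + 1"]) (auto dest!: bound_run)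
  have "(\<Sum>x\<in>U. ?E (\<lambda>h. real (hist_faults h) + (if x \<in> last_cache h then 0 else 1)))
      = ?E (\<lambda>h. \<Sum>x\<in>U. real (hist_faults h) + (if x \<in> last_cache h then 0 else 1))"
    using Bochner_Integration.integral_sum[where I=U and M="measure_pmf (run_alg R [] w)" and f="\<lambda>x h. real (hist_faults h) + (if x \<in> last_cache h then 0 else 1)"] int1
    by simp
  also have "\<dots> \<ge> ?E (\<lambda>h. real (card U) * (real (hist_faults h) + Phi U (last_cache h)) + 1)"
  proof (rule pmf_exp_mono)
    show "integrable (measure_pmf (run_alg R [] w)) (\<lambda>h. real (card U) * (real (hist_faults h) + Phi U (last_cache h)) + 1)"
      using int_Q[of R w U] by simp
    show "integrable (measure_pmf (run_alg R [] w)) (\<lambda>h. \<Sum>x\<in>U. real (hist_faults h) + (if x \<in> last_cache h then 0 else 1))"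
      by (rule Bochner_Integration.integrable_sum) (rule int1)
    fix h
    have "(\<Sum>x\<in>U. real (hist_faults h) + (if x \<in> last_cache h then 0 else 1))
        = real (card U) * real (hist_faults h) + real (card (U - last_cache h))"
      by (simp add: sum.distrib sum_ind[OF U(1)])
    with Phi_le[OF U, of "last_cache h"]
    show "real (card U) * (real (hist_faults h) + Phi U (last_cache h)) + 1
        \<le> (\<Sum>x\<in>U. real (hist_faults h) + (if x \<in> last_cache h then 0 else 1))"
      by (simp add: algebra_simps)
  qed
  also have "?E (\<lambda>h. real (card U) * (real (hist_faults h) + Phi U (last_cache h)) + 1) = real (card U) * EQ R w U + 1"
    unfolding EQ_def using int_Q[of R w U] by simp
  also have "(\<Sum>x\<in>U. ?E (\<lambda>h. real (hist_faults h) + (if x \<in> last_cache h then 0 else 1))) \<le> (\<Sum>x\<in>U. g x)"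
    by (rule sum_mono) (rule ge)
  finally have A: "real (card U) * EQ R w U + 1 \<le> (\<Sum>x\<in>U. g x)" .
  have "U \<noteq> {}" using U by (metis card.empty not_one_le_zero)
  then have "(\<Sum>x\<in>U. g x) < (\<Sum>x\<in>U. EQ R w U + 1 / real (card U))"
    using lt U(1) by (intro sum_strict_mono) auto
  also have "\<dots> = real (card U) * EQ R w U + 1" using U(2) by (simp add: field_simps)
  finally show False using A by simp
qed


lemma LB:
  assumes R: "valid_alg k R" and P: "finite P" "card P = Suc k" and k: "1 \<le> k"
  shows "S \<subseteq> P \<Longrightarrow> card S = k \<Longrightarrow> distinct ys \<Longrightarrow> set ys \<subseteq> P \<Longrightarrow> length ys < k \<Longrightarrow>
    \<exists>cs. length cs = n \<and> vc k P S ys cs \<and>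
        EQ R w (cands P S ys) + F k (length ys) n \<le> alg_cost R (w @ gen k m ys cs)"
proof (induction n arbitrary: S ys w)
  case 0
  have "EQ R w (cands P S ys) \<le> alg_cost R w"
    unfolding EQ_def alg_cost_def
    by (rule pmf_exp_mono[OF int_Q int_hf]) (simp add: Phi_bounds)
  then show ?case by (intro exI[of _ "[]"]) auto
next
  case (Suc n)
  define U where "U = cands P S ys"
  define ys' where "ys' = (\<lambda>x. if Suc (length ys) = k then [] else ys @ [x])"
  define S' where "S' = (\<lambda>x. if Suc (length ys) = k then set (ys @ [x]) else S)"
  define out where "out = (\<lambda>x. (x, False) # map (\<lambda>y. (y, m \<and> Suc (length ys) = k)) (ys @ [x]))"
  have finU: "finite U" unfolding U_def cands_def using P by auto
  have cardU: "card U = (if ys = [] then 1 else Suc k - length ys)"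
  proof (cases "ys = []")
    case True
    then show ?thesis unfolding U_def cands_def using card_Diff_subset[OF _ Suc.prems(1)] P Suc.prems(2)
      finite_subset[OF Suc.prems(1) P(1)] by simp
  next
    case False
    then show ?thesis unfolding U_def cands_def using card_Diff_subset[OF _ Suc.prems(4)] P
      distinct_card[OF Suc.prems(3)] by simp
  qed
  have cU1: "card U \<ge> 1" using cardU Suc.prems(5) by auto
  have uu: "uu k (length ys) = real (card U)" unfolding uu_def cardU by auto
  have xU: "distinct (ys @ [x]) \<and> set (ys @ [x]) \<subseteq> P" if "x \<in> U" for x
    using that Suc.prems(3,4) unfolding U_def cands_def by (auto split: if_splits)
  have wf: "S' x \<subseteq> P \<and> card (S' x) = k \<and> distinct (ys' x) \<and> set (ys' x) \<subseteq> P \<and> length (ys' x) < k"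
    if "x \<in> U" for x
    using xU[OF that] Suc.prems distinct_card[of "ys @ [x]"] unfolding S'_def ys'_def by auto
  have cU': "cands P (S' x) (ys' x) = P - set (ys @ [x])" for x
    unfolding cands_def S'_def ys'_def by auto
  have len': "length (ys' x) = (if Suc (length ys) = k then 0 else Suc (length ys))" for x
    unfolding ys'_def by auto
  have IH: "\<exists>cs. length cs = n \<and> vc k P (S' x) (ys' x) cs \<and>
      EQ R (w @ out x) (P - set (ys @ [x])) + F k (length (ys' x)) n \<le> alg_cost R ((w @ out x) @ gen k m (ys' x) cs)"
    if "x \<in> U" for x
    using Suc.IH[of "S' x" "ys' x" "w @ out x"] wf[OF that] cU'[of x] by auto
  have "\<exists>x\<in>U. EQ R w U + 1 / real (card U) \<le> EQ R (w @ out x) (P - set (ys @ [x]))"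
  proof (rule avg_step[OF finU cU1])
    fix x assume "x \<in> U"
    from xU[OF this] show "measure_pmf.expectation (run_alg R [] w) (\<lambda>h. real (hist_faults h) + (if x \<in> last_cache h then 0 else 1))
        \<le> EQ R (w @ out x) (P - set (ys @ [x]))"
      unfolding out_def using EQ_append_ge[OF R P _ _ Suc.prems(5)] by blast
  qed
  then obtain x where x: "x \<in> U" and gx: "EQ R w U + 1 / real (card U) \<le> EQ R (w @ out x) (P - set (ys @ [x]))"
    by blast
  from IH[OF x] obtain cs where cs: "length cs = n" "vc k P (S' x) (ys' x) cs"
    "EQ R (w @ out x) (P - set (ys @ [x])) + F k (length (ys' x)) n \<le> alg_cost R ((w @ out x) @ gen k m (ys' x) cs)"
    by blast
  have g: "gen k m ys (x # cs) = out x @ gen k m (ys' x) cs" unfolding out_def ys'_def by simp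
  have v: "vc k P S ys (x # cs)" using x cs(2) unfolding U_def S'_def ys'_def by (auto split: if_splits)
  have Fs: "F k (length ys) (Suc n) = 1 / real (card U) + F k (length (ys' x)) n"
    using uu len'[of x] by simp
  show ?case
  proof (intro exI[of _ "x # cs"] conjI)
    show "length (x # cs) = Suc n" using cs by simp
    show "vc k P S ys (x # cs)" by (rule v)
    show "EQ R w (cands P S ys) + F k (length ys) (Suc n) \<le> alg_cost R (w @ gen k m ys (x # cs))"
      using gx cs(3) unfolding Fs g U_def by simp
  qed
qed

lemma F_phase: "l < k \<Longrightarrow> F k l (k - l + n) = (\<Sum>j\<in>{l..<k}. 1 / uu k j) + F k 0 n"
proof (induction "k - l" arbitrary: l)
  case 0 then show ?case by simp
next
  case (Suc d)
  then have kl: "k - l = Suc d" by simp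
  show ?case
  proof (cases "Suc l = k")
    case True
    then have e: "k - l + n = Suc n" by simp
    have "{l..<k} = {l}" using True by auto
    then show ?thesis unfolding e using True by simp
  next
    case False
    then have l1: "Suc l < k" using Suc.prems by simp
    have IH: "F k (Suc l) (k - Suc l + n) = (\<Sum>j\<in>{Suc l..<k}. 1 / uu k j) + F k 0 n"
      using Suc.hyps(1)[of "Suc l"] l1 kl by simp
    have "F k l (k - l + n) = F k l (Suc (k - Suc l + n))" using Suc.prems by (simp add: Suc_diff_Suc)
    also have "\<dots> = 1 / uu k l + F k (Suc l) (k - Suc l + n)" using False by simp
    also have "\<dots> = (\<Sum>j\<in>{l..<k}. 1 / uu k j) + F k 0 n"
      using IH Suc.prems by (simp add: sum.atLeast_Suc_lessThan)
    finally show ?thesis .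
  qed
qed

lemma F_mult: "0 < k \<Longrightarrow> F k 0 (N * k) = real N * (\<Sum>j<k. 1 / uu k j)"
proof (induction N)
  case 0 then show ?case by simp
next
  case (Suc N)
  have "F k 0 (Suc N * k) = F k 0 (k - 0 + N * k)" by (simp add: add.commute)
  also have "\<dots> = (\<Sum>j\<in>{0..<k}. 1 / uu k j) + F k 0 (N * k)" by (rule F_phase) (use Suc in auto)
  finally show ?case using Suc by (simp add: atLeast0LessThan algebra_simps)
qed

lemma sum_uu: "1 \<le> k \<Longrightarrow> (\<Sum>j<k. 1 / uu k j) = harm k"
proof -
  assume k: "1 \<le> k"
  have A: "(\<Sum>j<k. 1 / uu k j) = 1 + (\<Sum>j\<in>{1..<k}. 1 / real (Suc k - j))"
  proof -
    have "{..<k} = insert 0 {1..<k}" using k by auto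
    then show ?thesis by (simp add: uu_def)
  qed
  have B: "(\<Sum>j\<in>{1..<k}. 1 / real (Suc k - j)) = (\<Sum>i\<in>{2..k}. 1 / real i)"
    by (rule sum.reindex_bij_witness[where i="\<lambda>i. Suc k - i" and j="\<lambda>j. Suc k - j"]) auto
  have C: "harm k = 1 + (\<Sum>i\<in>{2..k}. 1 / (real i) :: real)"
  proof -
    have "{1..k} = insert 1 {2..k}" using k by auto
    then show ?thesis unfolding harm_def by (simp add: divide_inverse)
  qed
  show ?thesis using A B C by simp
qed

lemma LB_main:
  assumes R: "valid_alg k R" and P: "finite P" "card P = Suc k" and k: "1 \<le> k"
    and S: "S \<subseteq> P" "card S = k"
  shows "\<exists>cs. length cs = N * k \<and> vc k P S [] cs \<and> real N * harm k \<le> alg_cost R (gen k m [] cs)"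
proof -
  from LB[OF R P k S, of "[]" "N * k" "[]" m] k
  obtain cs where cs: "length cs = N * k" "vc k P S [] cs"
    "EQ R [] (cands P S []) + F k 0 (N * k) \<le> alg_cost R (gen k m [] cs)" by auto
  have c1: "card (P - S) = 1" using card_Diff_subset[OF finite_subset[OF S(1) P(1)] S(1)] P S by simp
  have "EQ R [] (cands P S []) = 0"
    unfolding EQ_def cands_def using c1 by (simp add: hist_faults_def last_cache_def Phi_def)
  with cs F_mult[of k N] sum_uu[OF k] k show ?thesis by (intro exI[of _ cs]) auto
qed

definition victim :: "('p list \<Rightarrow> nat \<Rightarrow> 'p set \<Rightarrow> 'p) \<Rightarrow> 'p list \<Rightarrow> nat \<Rightarrow> 'p set \<Rightarrow> 'p" where
  "victim tie I i C = (let F = {q \<in> C. q \<notin> set (drop (Suc i) I)}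
     in if F \<noteq> {} then tie I i F else arg_max_on (next_req I i) C)"

lemma lfd_step_alt:
  "lfd_step k tie I i C = (if I!i \<in> C then C else if card C < k then insert (I!i) C
      else insert (I!i) (C - {victim tie I i C}))"
  by (simp add: lfd_step_def victim_def Let_def)

lemma arg_max_on_nat:
  fixes f :: "'a \<Rightarrow> nat"
  assumes "finite C" "C \<noteq> {}"
  shows "arg_max_on f C \<in> C \<and> (\<forall>y\<in>C. f y \<le> f (arg_max_on f C))"
proof -
  obtain c where c: "c \<in> C" using assms by auto
  have b: "\<forall>y. y \<in> C \<longrightarrow> f y < Suc (Max (f ` C))"
    using assms by (auto simp: le_imp_less_Suc)
  show ?thesis using arg_max_nat_lemma[of "\<lambda>x. x \<in> C" c f, OF c b] unfolding arg_max_on_def by auto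
qed

lemma victim_in:
  assumes "valid_tie tie" "finite C" "C \<noteq> {}"
  shows "victim tie I i C \<in> C"
proof (cases "{q \<in> C. q \<notin> set (drop (Suc i) I)} = {}")
  case True
  then show ?thesis using arg_max_on_nat[OF assms(2,3)] by (simp add: victim_def Let_def)
next
  case False
  moreover have "\<And>F. finite F \<Longrightarrow> F \<noteq> {} \<Longrightarrow> tie I i F \<in> F" using assms(1) unfolding valid_tie_def by blast
  moreover have "finite {q \<in> C. q \<notin> set (drop (Suc i) I)}" using assms(2) by simp
  ultimately have "tie I i {q \<in> C. q \<notin> set (drop (Suc i) I)} \<in> {q \<in> C. q \<notin> set (drop (Suc i) I)}"
    by blast
  then show ?thesis using False by (simp add: victim_def Let_def)
qed

lemma victim_F:
  assumes "valid_tie tie" "finite C" "q \<in> C" "q \<notin> set (drop (Suc i) I)"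
  shows "victim tie I i C \<notin> set (drop (Suc i) I)"
proof -
  have ne: "{q \<in> C. q \<notin> set (drop (Suc i) I)} \<noteq> {}" using assms by auto
  moreover have "\<And>F. finite F \<Longrightarrow> F \<noteq> {} \<Longrightarrow> tie I i F \<in> F" using assms(1) unfolding valid_tie_def by blast
  moreover have "finite {q \<in> C. q \<notin> set (drop (Suc i) I)}" using assms(2) by simp
  ultimately have "tie I i {q \<in> C. q \<notin> set (drop (Suc i) I)} \<in> {q \<in> C. q \<notin> set (drop (Suc i) I)}"
    by blast
  then show ?thesis using ne by (simp add: victim_def Let_def)
qed

lemma victim_max:
  assumes "finite C" "C \<noteq> {}" "\<forall>q\<in>C. q \<in> set (drop (Suc i) I)" "y \<in> C"
  shows "next_req I i y \<le> next_req I i (victim tie I i C)"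
proof -
  have "{q \<in> C. q \<notin> set (drop (Suc i) I)} = {}" using assms(3) by auto
  then show ?thesis using arg_max_on_nat[OF assms(1,2), of "next_req I i"] assms(4)
    by (simp add: victim_def Let_def)
qed

lemma in_set_drop_iff: "q \<in> set (drop (Suc i) I) \<longleftrightarrow> (\<exists>t. i < t \<and> t < length I \<and> I ! t = q)"
proof
  assume "q \<in> set (drop (Suc i) I)"
  then obtain t where "t < length (drop (Suc i) I)" "drop (Suc i) I ! t = q" by (auto simp: in_set_conv_nth)
  then show "\<exists>t. i < t \<and> t < length I \<and> I ! t = q" by (intro exI[of _ "Suc i + t"]) auto
next
  assume "\<exists>t. i < t \<and> t < length I \<and> I ! t = q"
  then obtain t where t: "i < t" "t < length I" "I!t = q" by blast
  then have "drop (Suc i) I ! (t - Suc i) = q" "t - Suc i < length (drop (Suc i) I)" by auto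
  then show "q \<in> set (drop (Suc i) I)" by (metis nth_mem)
qed

lemma next_req_le: "i < t \<Longrightarrow> t < length I \<Longrightarrow> I ! t = q \<Longrightarrow> next_req I i q \<le> t"
  unfolding next_req_def by (rule Least_le) auto

lemma next_req_ge:
  assumes "\<exists>t. i < t \<and> t < length I \<and> I ! t = q" "\<And>t. i < t \<Longrightarrow> t < length I \<Longrightarrow> I ! t = q \<Longrightarrow> X \<le> t"
  shows "X \<le> next_req I i q"
  unfolding next_req_def by (rule LeastI2_ex[OF assms(1)]) (use assms(2) in auto)

context
  fixes k :: nat and tie :: "'p list \<Rightarrow> nat \<Rightarrow> 'p set \<Rightarrow> 'p" and I :: "'p list"
  assumes k: "1 \<le> k" and tie: "valid_tie tie"
begin

abbreviation CC where "CC i \<equiv> lfd_cache k tie I i"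

lemma lfd_fin: "finite (CC i) \<and> card (CC i) \<le> k"
proof (induction i)
  case 0 then show ?case by simp
next
  case (Suc i)
  show ?case
  proof (cases "I!i \<in> CC i \<or> card (CC i) < k")
    case True then show ?thesis using Suc by (auto simp: lfd_step_alt card_insert_if)
  next
    case False
    then have ne: "CC i \<noteq> {}" using k by auto
    have v: "victim tie I i (CC i) \<in> CC i" using victim_in[OF tie _ ne] Suc by auto
    have "card (CC i) > 0" using v Suc by (auto simp: card_gt_0_iff)
    then have "card (insert (I!i) (CC i - {victim tie I i (CC i)})) = card (CC i)"
      using False v Suc by (simp add: card_insert_if card_Diff_singleton)
    then show ?thesis using False Suc by (simp add: lfd_step_alt)
  qed
qed

lemma lfd_sub_step: "CC (Suc i) \<subseteq> insert (I!i) (CC i)"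
  by (auto simp: lfd_step_alt)

lemma lfd_req: "I!i \<in> CC (Suc i)"
  by (auto simp: lfd_step_alt)

lemma lfd_sub_take: "i \<le> length I \<Longrightarrow> CC i \<subseteq> set (take i I)"
proof (induction i)
  case 0 then show ?case by simp
next
  case (Suc i)
  then have "CC i \<subseteq> set (take i I)" by simp
  moreover have "set (take (Suc i) I) = insert (I!i) (set (take i I))"
    using Suc.prems by (simp add: take_Suc_conv_app_nth)
  ultimately show ?case using lfd_sub_step[of i] by auto
qed

definition evs :: "nat \<Rightarrow> bool" where
  "evs s \<longleftrightarrow> I!s \<notin> CC s \<and> \<not> card (CC s) < k"

lemma lfd_leave:
  assumes "v \<in> CC s" "v \<notin> CC (Suc s)"
  shows "evs s \<and> v = victim tie I s (CC s) \<and> v \<noteq> I!s"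
  using assms unfolding evs_def by (auto simp: lfd_step_alt split: if_splits)

lemma lfd_evict:
  assumes "evs s"
  shows "victim tie I s (CC s) \<in> CC s \<and> victim tie I s (CC s) \<notin> CC (Suc s)"
proof -
  have ne: "CC s \<noteq> {}" using assms k unfolding evs_def by auto
  have "victim tie I s (CC s) \<in> CC s" using victim_in[OF tie _ ne] lfd_fin by auto
  then show ?thesis using assms unfolding evs_def by (auto simp: lfd_step_alt)
qed

lemma lfd_first_leave:
  assumes "v \<in> CC a" "v \<notin> CC b" "a \<le> b"
  shows "\<exists>s. a \<le> s \<and> s < b \<and> v \<in> CC s \<and> v \<notin> CC (Suc s)"
  using assms
proof (induction b)
  case 0 then show ?case by simp
next
  case (Suc b)
  show ?case
  proof (cases "a = Suc b")
    case True then show ?thesis using Suc by simp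
  next
    case False
    then have ab: "a \<le> b" using Suc by simp
    show ?thesis
    proof (cases "v \<in> CC b")
      case True then show ?thesis using Suc ab by (intro exI[of _ b]) auto
    next
      case False
      from Suc.IH[OF Suc.prems(1) False ab] show ?thesis by (metis less_Suc_eq)
    qed
  qed
qed

lemma lfd_stay:
  assumes "v \<in> CC a" "a \<le> b" "\<And>s. a \<le> s \<Longrightarrow> s < b \<Longrightarrow> \<not> evs s"
  shows "v \<in> CC b"
  using lfd_first_leave[OF assms(1) _ assms(2)] lfd_leave assms(3) by blast

lemma fill_count: "card {i. i < n \<and> I!i \<notin> CC i \<and> card (CC i) < k} \<le> card (CC n)"
proof (induction n)
  case 0 then show ?case by simp
next
  case (Suc n)
  have mono: "card (CC n) \<le> card (CC (Suc n))"
  proof (cases "I!n \<in> CC n \<or> card (CC n) < k")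
    case True then show ?thesis using lfd_fin[of n] by (auto simp: lfd_step_alt card_insert_if)
  next
    case False
    then have ne: "CC n \<noteq> {}" using k by auto
    have v: "victim tie I n (CC n) \<in> CC n" using victim_in[OF tie _ ne] lfd_fin by auto
    have "card (CC n) > 0" using v lfd_fin[of n] by (auto simp: card_gt_0_iff)
    then have "card (insert (I!n) (CC n - {victim tie I n (CC n)})) = card (CC n)"
      using False v lfd_fin[of n] by (simp add: card_insert_if card_Diff_singleton)
    then show ?thesis using False by (simp add: lfd_step_alt)
  qed
  show ?case
  proof (cases "I!n \<notin> CC n \<and> card (CC n) < k")
    case True
    have "{i. i < Suc n \<and> I!i \<notin> CC i \<and> card (CC i) < k} = insert n {i. i < n \<and> I!i \<notin> CC i \<and> card (CC i) < k}"
      using True by auto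
    then have "card {i. i < Suc n \<and> I!i \<notin> CC i \<and> card (CC i) < k} = Suc (card {i. i < n \<and> I!i \<notin> CC i \<and> card (CC i) < k})"
      by simp
    moreover have "card (CC (Suc n)) = Suc (card (CC n))"
      using True lfd_fin[of n] by (simp add: lfd_step_alt)
    ultimately show ?thesis using Suc by simp
  next
    case False
    have "{i. i < Suc n \<and> I!i \<notin> CC i \<and> card (CC i) < k} = {i. i < n \<and> I!i \<notin> CC i \<and> card (CC i) < k}"
      using False by (auto simp: less_Suc_eq)
    then show ?thesis using Suc mono by simp
  qed
qed

lemma fill_le_k: "card {i. i < n \<and> I!i \<notin> CC i \<and> card (CC i) < k} \<le> k"
  using fill_count[of n] lfd_fin[of n] by linarith

lemma lfd_run:
  "m \<le> length I \<Longrightarrow> valid_run k (CC m) (zip (drop m I) (map (\<lambda>i. CC (Suc i)) [m..<length I]))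
     \<and> fault_count (CC m) (zip (drop m I) (map (\<lambda>i. CC (Suc i)) [m..<length I]))
        = card {i. m \<le> i \<and> i < length I \<and> I!i \<notin> CC i}"
proof (induction "length I - m" arbitrary: m)
  case 0 then show ?case by simp
next
  case (Suc d)
  then have m: "m < length I" by simp
  have IH: "valid_run k (CC (Suc m)) (zip (drop (Suc m) I) (map (\<lambda>i. CC (Suc i)) [Suc m..<length I]))
     \<and> fault_count (CC (Suc m)) (zip (drop (Suc m) I) (map (\<lambda>i. CC (Suc i)) [Suc m..<length I]))
        = card {i. Suc m \<le> i \<and> i < length I \<and> I!i \<notin> CC i}"
    using Suc.hyps(1)[of "Suc m"] Suc.hyps(2) m by simp
  have z: "zip (drop m I) (map (\<lambda>i. CC (Suc i)) [m..<length I]) =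
      (I!m, CC (Suc m)) # zip (drop (Suc m) I) (map (\<lambda>i. CC (Suc i)) [Suc m..<length I])"
    using m by (simp add: Cons_nth_drop_Suc[symmetric] upt_conv_Cons)
  have set_eq: "{i. m \<le> i \<and> i < length I \<and> I!i \<notin> CC i} =
      (if I!m \<notin> CC m then insert m {i. Suc m \<le> i \<and> i < length I \<and> I!i \<notin> CC i}
       else {i. Suc m \<le> i \<and> i < length I \<and> I!i \<notin> CC i})"
    using m by (auto simp: Suc_le_eq order.order_iff_strict)
  show ?case
    unfolding z using IH lfd_req[of m] lfd_fin[of "Suc m"] lfd_sub_step[of m] set_eq
    by (auto simp: card_insert_if)
qed

lemma opt_le_lfd: "opt k I \<le> card {i. i < length I \<and> I!i \<notin> CC i}"
proof -
  define cs where "cs = map (\<lambda>i. CC (Suc i)) [0..<length I]"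
  have "valid_run k {} (zip I cs) \<and> fault_count {} (zip I cs) = card {i. i < length I \<and> I!i \<notin> CC i}"
    using lfd_run[of 0] unfolding cs_def by simp
  moreover have "length cs = length I" unfolding cs_def by simp
  ultimately show ?thesis unfolding opt_def by (intro Least_le exI[of _ cs]) auto
qed

lemma opt_le_k_evs: "opt k I \<le> k + card {i. i < length I \<and> evs i}"
proof -
  have "{i. i < length I \<and> I!i \<notin> CC i} \<subseteq> {i. i < length I \<and> I!i \<notin> CC i \<and> card (CC i) < k} \<union> {i. i < length I \<and> evs i}"
    unfolding evs_def by auto
  then have "card {i. i < length I \<and> I!i \<notin> CC i} \<le> card ({i. i < length I \<and> I!i \<notin> CC i \<and> card (CC i) < k} \<union> {i. i < length I \<and> evs i})"
    by (rule card_mono[rotated]) auto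
  also have "\<dots> \<le> card {i. i < length I \<and> I!i \<notin> CC i \<and> card (CC i) < k} + card {i. i < length I \<and> evs i}"
    by (rule card_Un_le)
  finally have "card {i. i < length I \<and> I!i \<notin> CC i} \<le> card {i. i < length I \<and> I!i \<notin> CC i \<and> card (CC i) < k} + card {i. i < length I \<and> evs i}" .
  then show ?thesis using opt_le_lfd fill_le_k[of "length I"] by linarith
qed

lemma ne_le: "next_or_end I i \<le> length I"
proof (cases "\<exists>j. i < j \<and> j < length I \<and> I ! j = I ! i")
  case True
  then have "(LEAST j. i < j \<and> j < length I \<and> I ! j = I ! i) < length I" by (rule LeastI2_ex) auto
  then show ?thesis using True by (simp add: next_or_end_def next_req_def)
next
  case False
  have "next_or_end I i = length I" unfolding next_or_end_def using False by (rule if_not_P)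
  then show ?thesis by simp
qed

lemma ne_between:
  assumes "i < j" "j < next_or_end I i"
  shows "I!j \<noteq> I!i"
proof (cases "\<exists>j. i < j \<and> j < length I \<and> I ! j = I ! i")
  case True
  then have l: "(LEAST j. i < j \<and> j < length I \<and> I ! j = I ! i) < length I" by (rule LeastI2_ex) auto
  have "j < (LEAST j. i < j \<and> j < length I \<and> I ! j = I ! i)"
    using assms(2) True by (simp add: next_or_end_def next_req_def)
  from not_less_Least[OF this] l this assms(1) show ?thesis by auto
next
  case False
  have "next_or_end I i = length I" unfolding next_or_end_def using False by (rule if_not_P)
  then show ?thesis using assms False by auto
qed

lemma ne_gt:
  assumes "i < j" "j < length I" "\<And>t. i < t \<Longrightarrow> t \<le> j \<Longrightarrow> I!t \<noteq> I!i"
  shows "j < next_or_end I i"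
proof (cases "\<exists>j. i < j \<and> j < length I \<and> I ! j = I ! i")
  case True
  have "j < (LEAST j. i < j \<and> j < length I \<and> I ! j = I ! i)"
    using True by (rule LeastI2_ex) (use assms in \<open>force simp: not_less[symmetric]\<close>)
  then show ?thesis using True by (simp add: next_or_end_def next_req_def)
next
  case False
  have "next_or_end I i = length I" unfolding next_or_end_def using False by (rule if_not_P)
  then show ?thesis using assms False by auto
qed

lemma pstar_evict:
  assumes "discard_pstar k tie I i" "i < length I"
  shows "\<exists>s. i < s \<and> s < next_or_end I i \<and> evs s \<and> I!i = victim tie I s (CC s)"
proof -
  from assms(1) obtain j where j: "i < j" "j \<le> next_or_end I i" "I!i \<notin> CC j"
    unfolding discard_pstar_def by blast
  from lfd_first_leave[OF lfd_req[of i] j(3)] j(1) obtain s where s: "Suc i \<le> s" "s < j" "I!i \<in> CC s" "I!i \<notin> CC (Suc s)"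
    by auto
  from lfd_leave[OF s(3,4)] s j show ?thesis by (intro exI[of _ s]) auto
qed

end

fun chain :: "nat \<Rightarrow> 'p set \<Rightarrow> 'p set \<Rightarrow> 'p list list \<Rightarrow> bool" where
  "chain k P S [] = True"
| "chain k P S (xs # XS) = (length xs = k \<and> distinct xs \<and> set xs \<subseteq> P \<and> hd xs \<notin> S \<and> chain k P (set xs) XS)"

lemma gen_split: "length ys + length zs = k \<Longrightarrow> zs \<noteq> [] \<Longrightarrow> gen k m ys (zs @ cs) = gen k m ys zs @ gen k m [] cs"
proof (induction zs arbitrary: ys)
  case Nil then show ?case by simp
next
  case (Cons x zs)
  show ?case
  proof (cases "Suc (length ys) = k")
    case True
    have "length ys + Suc (length zs) = k" using Cons.prems by simp
    with True have "length zs = 0" by linarith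
    then have "zs = []" by simp
    then show ?thesis using True by simp
  next
    case False
    then have "zs \<noteq> []" using Cons.prems by auto
    then show ?thesis using Cons.IH[of "ys @ [x]"] Cons.prems False by simp
  qed
qed

lemma vc_split: "length ys + length zs = k \<Longrightarrow> zs \<noteq> [] \<Longrightarrow>
    vc k P S ys (zs @ cs) = (vc k P S ys zs \<and> vc k P (set (ys @ zs)) [] cs)"
proof (induction zs arbitrary: ys S)
  case Nil then show ?case by simp
next
  case (Cons x zs)
  show ?case
  proof (cases "Suc (length ys) = k")
    case True
    have "length ys + Suc (length zs) = k" using Cons.prems by simp
    with True have "length zs = 0" by linarith
    then have "zs = []" by simp
    then show ?thesis using True by simp
  next
    case False
    then have "zs \<noteq> []" using Cons.prems by auto
    then show ?thesis using Cons.IH[of "ys @ [x]"] Cons.prems False by simp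
  qed
qed

lemma vc_phase: "vc k P S ys zs \<Longrightarrow> length ys + length zs = k \<Longrightarrow> distinct ys \<Longrightarrow> set ys \<subseteq> P \<Longrightarrow>
    distinct (ys @ zs) \<and> set zs \<subseteq> P \<and> (ys = [] \<longrightarrow> zs \<noteq> [] \<longrightarrow> hd zs \<notin> S)"
proof (induction zs arbitrary: ys S)
  case Nil then show ?case by simp
next
  case (Cons x zs)
  have x: "x \<in> P" "x \<notin> set ys" "ys = [] \<longrightarrow> x \<notin> S"
    using Cons.prems(1) by (auto simp: cands_def split: if_splits)
  show ?case
  proof (cases "Suc (length ys) = k")
    case True
    have "length ys + Suc (length zs) = k" using Cons.prems(2) by simp
    with True have "length zs = 0" by linarith
    then have "zs = []" by simp
    then show ?thesis using x Cons.prems by simp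
  next
    case False
    then have "vc k P S (ys @ [x]) zs" using Cons.prems by simp
    from Cons.IH[OF this] Cons.prems x show ?thesis by simp
  qed
qed

lemma vc_chain: "1 \<le> k \<Longrightarrow> length cs = N * k \<Longrightarrow> vc k P S [] cs \<Longrightarrow>
    \<exists>XS. cs = concat XS \<and> length XS = N \<and> chain k P S XS"
proof (induction N arbitrary: S cs)
  case 0 then show ?case by (intro exI[of _ "[]"]) simp
next
  case (Suc N)
  define xs where "xs = take k cs"
  define rest where "rest = drop k cs"
  have cs: "cs = xs @ rest" unfolding xs_def rest_def by simp
  have lx: "length xs = k" using Suc.prems unfolding xs_def by simp
  have lr: "length rest = N * k" using Suc.prems unfolding rest_def by simp
  have ne: "xs \<noteq> []" using lx Suc.prems(1) by auto
  have v: "vc k P S [] xs" "vc k P (set xs) [] rest"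
    using vc_split[of "[]" xs k P S rest, OF _ ne] Suc.prems(3) cs lx by auto
  have ph: "distinct xs \<and> set xs \<subseteq> P \<and> hd xs \<notin> S"
    using vc_phase[OF v(1)] lx Suc.prems(1) by auto
  from Suc.IH[OF Suc.prems(1) lr v(2)] obtain XS where XS: "rest = concat XS" "length XS = N" "chain k P (set xs) XS"
    by blast
  show ?case using XS ph lx cs by (intro exI[of _ "xs # XS"]) auto
qed

lemma chain_len: "chain k P S XS \<Longrightarrow> xs \<in> set XS \<Longrightarrow> length xs = k"
  by (induction XS arbitrary: S) auto

lemma gen_concat: "1 \<le> k \<Longrightarrow> (\<forall>xs\<in>set XS. length xs = k) \<Longrightarrow> gen k m [] (concat XS) = concat (map (gen k m []) XS)"
proof (induction XS)
  case Nil then show ?case by simp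
next
  case (Cons xs XS)
  then have "xs \<noteq> []" by auto
  then show ?case using Cons gen_split[of "[]" xs k m] by simp
qed

definition blk :: "nat \<Rightarrow> bool \<Rightarrow> 'p list \<Rightarrow> nat \<Rightarrow> ('p \<times> bool) list" where
  "blk k m xs j = (xs!j, False) # map (\<lambda>y. (y, m \<and> Suc j = k)) (take (Suc j) xs)"

lemma gen_explicit: "length ys + length zs = k \<Longrightarrow>
    gen k m ys zs = concat (map (blk k m (ys @ zs)) [length ys..<k])"
proof (induction zs arbitrary: ys)
  case Nil then show ?case by simp
next
  case (Cons x zs)
  have lt: "length ys < k" using Cons.prems by simp
  have b: "blk k m (ys @ x # zs) (length ys) = (x, False) # map (\<lambda>y. (y, m \<and> Suc (length ys) = k)) (ys @ [x])"
    unfolding blk_def by simp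
  show ?case
  proof (cases "Suc (length ys) = k")
    case True
    have "length ys + Suc (length zs) = k" using Cons.prems by simp
    with True have "length zs = 0" by linarith
    then have "zs = []" by simp
    then show ?thesis using True b by (simp add: upt_conv_Cons lt)
  next
    case False
    have "gen k m (ys @ [x]) zs = concat (map (blk k m (ys @ x # zs)) [Suc (length ys)..<k])"
      using Cons.IH[of "ys @ [x]"] Cons.prems by simp
    then show ?thesis using False b by (simp add: upt_conv_Cons lt)
  qed
qed

definition Lk :: "nat \<Rightarrow> nat" where "Lk k = (\<Sum>j<k. Suc (Suc j))"

lemma Lk_ge: "2 * k \<le> Lk k"
  unfolding Lk_def by (induction k) auto

lemma len_blk: "length (blk k m xs j) = Suc (Suc j)" if "j < length xs"
  using that unfolding blk_def by simp

lemma len_concat_blk: "n \<le> length xs \<Longrightarrow> length (concat (map (blk k m xs) [0..<n])) = (\<Sum>j<n. Suc (Suc j))"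
  by (induction n) (auto simp: len_blk)

context
  fixes k :: nat and m :: bool and xs :: "'p list"
  assumes k: "1 \<le> k" and lx: "length xs = k"
begin

definition preA where "preA = concat (map (blk k m xs) [0..<k - 1])"

lemma gen_decomp: "gen k m [] xs = (preA @ [(xs!(k-1), False)]) @ map (\<lambda>y. (y, m)) xs"
proof -
  have u: "[0..<k] = [0..<k-1] @ [k-1]" using k by (metis Suc_diff_1 less_le_trans upt_Suc_append zero_le zero_less_one)
  have "blk k m xs (k - 1) = (xs!(k-1), False) # map (\<lambda>y. (y, m)) xs"
    unfolding blk_def using k lx by simp
  then show ?thesis using gen_explicit[of "[]" xs k m] lx u unfolding preA_def by simp
qed

lemma len_preA: "length preA + Suc k = Lk k"
proof -
  have "length preA = (\<Sum>j<k-1. Suc (Suc j))" unfolding preA_def using lx by (intro len_concat_blk) simp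
  moreover have "Lk k = (\<Sum>j<k-1. Suc (Suc j)) + Suc (Suc (k - 1))"
    unfolding Lk_def using k by (metis Suc_diff_1 less_le_trans sum.lessThan_Suc zero_less_one)
  ultimately show ?thesis using k by simp
qed

lemma gen_len: "length (gen k m [] xs) = Lk k"
  using gen_decomp len_preA lx by simp

lemma snd_preA: "z \<in> set preA \<Longrightarrow> snd z = False"
  unfolding preA_def blk_def by auto

lemma gen_snd: "r < Lk k \<Longrightarrow> snd (gen k m [] xs ! r) = (m \<and> Lk k - k \<le> r)"
proof -
  assume r: "r < Lk k"
  show ?thesis
  proof (cases "r < Lk k - k")
    case True
    then have "r < length (preA @ [(xs!(k-1), False)])" using len_preA by simp
    then have "gen k m [] xs ! r = (preA @ [(xs!(k-1), False)]) ! r" unfolding gen_decomp by (simp add: nth_append)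
    then show ?thesis using True snd_preA
      by (cases "r < length preA") (auto simp: nth_append len_preA[symmetric] dest!: nth_mem)
  next
    case False
    then obtain t where t: "r = Lk k - k + t" by (metis le_add_diff_inverse not_less)
    have e: "Lk k - k + t = length (preA @ [(xs!(k-1), False)]) + t" using len_preA by simp
    have "gen k m [] xs ! r = map (\<lambda>y. (y, m)) xs ! t"
      unfolding gen_decomp t e nth_append_length_plus by simp
    moreover have "t < length xs" using t r lx by simp
    ultimately show ?thesis using False r lx by simp
  qed
qed

lemma gen_fst_final: "t < k \<Longrightarrow> fst (gen k m [] xs ! (Lk k - k + t)) = xs ! t"
proof -
  assume t: "t < k"
  have e: "Lk k - k + t = length (preA @ [(xs!(k-1), False)]) + t" using len_preA by simp
  show ?thesis unfolding gen_decomp e nth_append_length_plus using t lx by simp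
qed

lemma gen_fst_0: "fst (gen k m [] xs ! 0) = hd xs"
proof -
  have "[0..<k] = 0 # [1..<k]" using k by (simp add: upt_conv_Cons)
  then have "gen k m [] xs = blk k m xs 0 @ concat (map (blk k m xs) [1..<k])"
    using gen_explicit[of "[]" xs k m] lx by simp
  moreover have "xs \<noteq> []" using lx k by auto
  ultimately show ?thesis by (simp add: blk_def hd_conv_nth)
qed

lemma gen_set: "set (map fst (gen k m [] xs)) = set xs"
proof
  show "set (map fst (gen k m [] xs)) \<subseteq> set xs"
    using gen_explicit[of "[]" xs k m] lx
    by (auto simp: blk_def dest: in_set_takeD)
  show "set xs \<subseteq> set (map fst (gen k m [] xs))"
    unfolding gen_decomp by auto
qed

end

lemma chain_nth: "chain k P S XS \<Longrightarrow> p < length XS \<Longrightarrow>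
   length (XS!p) = k \<and> distinct (XS!p) \<and> set (XS!p) \<subseteq> P \<and> hd (XS!p) \<notin> (if p = 0 then S else set (XS!(p-1)))"
proof (induction XS arbitrary: S p)
  case Nil then show ?case by simp
next
  case (Cons xs XS)
  show ?case
  proof (cases p)
    case 0 then show ?thesis using Cons by simp
  next
    case (Suc q)
    then have "q < length XS" using Cons by simp
    from Cons.IH[of "set xs" q] this Cons.prems Suc show ?thesis
      by (cases q) auto
  qed
qed

lemma concat_unif_len: "(\<forall>x\<in>set xss. length x = L) \<Longrightarrow> length (concat xss) = length xss * L"
  by (induction xss) auto

lemma concat_unif_nth: "(\<forall>x\<in>set xss. length x = L) \<Longrightarrow> p < length xss \<Longrightarrow> r < L \<Longrightarrow>
    concat xss ! (p * L + r) = xss ! p ! r"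
proof (induction xss arbitrary: p)
  case Nil then show ?case by simp
next
  case (Cons x xss)
  show ?case
  proof (cases p)
    case 0 then show ?thesis using Cons by (simp add: nth_append)
  next
    case (Suc q)
    then have "concat (x # xss) ! (p * L + r) = concat xss ! (q * L + r)"
      using Cons.prems by (simp add: nth_append add.assoc)
    then show ?thesis using Cons Suc by simp
  qed
qed

locale inst =
  fixes k :: nat and P :: "'p set" and S0 :: "'p set" and XS :: "'p list list"
    and tie :: "'p list \<Rightarrow> nat \<Rightarrow> 'p set \<Rightarrow> 'p" and m :: bool
  assumes k: "1 \<le> k" and P: "finite P" "card P = Suc k" and S0: "S0 \<subseteq> P" "card S0 = k"
    and ch: "chain k P S0 XS" and tie: "valid_tie tie"
begin

definition L where "L = Lk k"
definition N where "N = length XS"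
definition W where "W = concat (map (gen k m []) XS)"
definition I where "I = map fst W"
definition Sp where "Sp p = set (XS ! p)"

abbreviation C where "C i \<equiv> lfd_cache k tie I i"
abbreviation ev where "ev s \<equiv> evs k tie I s"

lemma L_gt: "k < L" "0 < L"
  using Lk_ge[of k] k unfolding L_def by auto

lemma XS_len: "xs \<in> set XS \<Longrightarrow> length xs = k"
  using chain_len[OF ch] by blast

lemma XSp: "p < N \<Longrightarrow> length (XS!p) = k \<and> distinct (XS!p) \<and> Sp p \<subseteq> P \<and> hd (XS!p) \<notin> (if p = 0 then S0 else Sp (p-1))"
  using chain_nth[OF ch] unfolding N_def Sp_def by blast

lemma genlen: "xs \<in> set (map (gen k m []) XS) \<Longrightarrow> length xs = L"
  using gen_len[OF k] XS_len unfolding L_def by auto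

lemma allgen: "\<forall>x\<in>set (map (gen k m []) XS). length x = L"
  using genlen by blast

lemma lenW: "length W = N * L"
  unfolding W_def N_def using concat_unif_len[OF allgen] by simp

lemma lenI: "length I = N * L"
  unfolding I_def using lenW by simp

lemma W_nth: "p < N \<Longrightarrow> r < L \<Longrightarrow> W ! (p * L + r) = gen k m [] (XS!p) ! r"
  unfolding W_def N_def using concat_unif_nth[OF allgen] by simp

lemma divmod: "i < N * L \<Longrightarrow> i = (i div L) * L + i mod L \<and> i div L < N \<and> i mod L < L"
  using L_gt by (auto simp: less_mult_imp_div_less)

lemma I_nth: "p < N \<Longrightarrow> r < L \<Longrightarrow> I ! (p * L + r) = fst (gen k m [] (XS!p) ! r)"
proof -
  assume a: "p < N" "r < L"
  have "p * L + r < Suc p * L" using a by simp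
  also have "Suc p * L \<le> N * L" using a by (intro mult_le_mono1) simp
  finally have "p * L + r < N * L" .
  then show ?thesis unfolding I_def using W_nth[OF a] lenW by simp
qed

lemma I_snd: "i < N * L \<Longrightarrow> snd (W ! i) = (m \<and> L - k \<le> i mod L)"
proof -
  assume i: "i < N * L"
  from divmod[OF i] have d: "i = (i div L) * L + i mod L" "i div L < N" "i mod L < L" by auto
  have "W ! i = gen k m [] (XS ! (i div L)) ! (i mod L)" using W_nth[OF d(2,3)] d(1) by simp
  then show ?thesis using gen_snd[OF k, of "XS ! (i div L)" "i mod L" m] XSp[OF d(2)] d(3) unfolding L_def by simp
qed

lemma Sp_fin: "p < N \<Longrightarrow> finite (Sp p) \<and> card (Sp p) = k \<and> Sp p \<subseteq> P"
  using XSp[of p] distinct_card[of "XS ! p"] unfolding Sp_def by auto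

lemma I_in: "i < N * L \<Longrightarrow> I ! i \<in> Sp (i div L)"
proof -
  assume i: "i < N * L"
  from divmod[OF i] have d: "i = (i div L) * L + i mod L" "i div L < N" "i mod L < L" by auto
  have "I ! i = fst (gen k m [] (XS ! (i div L)) ! (i mod L))" using I_nth[OF d(2,3)] d(1) by simp
  moreover have "length (gen k m [] (XS ! (i div L))) = L" using gen_len[OF k, of "XS ! (i div L)" m] XSp[OF d(2)] unfolding L_def by auto
  ultimately show ?thesis using gen_set[OF k, of "XS ! (i div L)" m] XSp[OF d(2)] d(3) unfolding Sp_def
    by (metis length_map nth_map nth_mem)
qed

lemma I_P: "i < N * L \<Longrightarrow> I ! i \<in> P"
  using I_in Sp_fin divmod by blast

lemma I_forced: "p < N \<Longrightarrow> I ! (p * L) = hd (XS ! p)"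
  using I_nth[of p 0] L_gt gen_fst_0[OF k, of "XS!p" m] XSp[of p] by simp

lemma I_final: "p < N \<Longrightarrow> t < k \<Longrightarrow> I ! (p * L + (L - k) + t) = XS ! p ! t"
  using I_nth[of p "L - k + t"] L_gt gen_fst_final[OF k, of "XS!p" t m] XSp[of p] unfolding L_def
  by (simp add: add.assoc)

lemma final_occ: "p < N \<Longrightarrow> v \<in> Sp p \<Longrightarrow> \<exists>t<k. I ! (p * L + (L - k) + t) = v"
  using I_final XSp[of p] unfolding Sp_def by (metis in_set_conv_nth)

lemma final_pos: "t < k \<Longrightarrow> p * L < p * L + (L - k) + t \<and> p * L + (L - k) + t < Suc p * L"
  using L_gt by auto

lemma hd_in: "p < N \<Longrightarrow> hd (XS ! p) \<in> Sp p"
  using XSp[of p] k unfolding Sp_def by (metis hd_in_set list.size(3) not_one_le_zero)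

lemma P_eq: "0 < p \<Longrightarrow> p < N \<Longrightarrow> P = insert (hd (XS!p)) (Sp (p-1)) \<and> hd (XS!p) \<notin> Sp (p-1)"
proof -
  assume p: "0 < p" "p < N"
  have nin: "hd (XS!p) \<notin> Sp (p-1)" using XSp[OF p(2)] p(1) by simp
  have sub: "insert (hd (XS!p)) (Sp (p-1)) \<subseteq> P" using hd_in[OF p(2)] Sp_fin[of p] Sp_fin[of "p-1"] p by auto
  have "card (insert (hd (XS!p)) (Sp (p-1))) = Suc k" using nin Sp_fin[of "p-1"] p by simp
  then have "insert (hd (XS!p)) (Sp (p-1)) = P" using card_subset_eq[OF P(1) sub] P by simp
  then show ?thesis using nin by simp
qed

lemma o_ex: "p < N \<Longrightarrow> \<exists>ov. P - Sp p = {ov}"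
proof -
  assume p: "p < N"
  have "card (P - Sp p) = 1" using card_Diff_subset[of "Sp p" P] Sp_fin[OF p] P by simp
  then show ?thesis by (rule card_1_singletonE) auto
qed

lemma C_sub: "s \<le> N * L \<Longrightarrow> C s \<subseteq> P"
proof -
  assume s: "s \<le> N * L"
  have "C s \<subseteq> set (take s I)" using lfd_sub_take[OF k tie] s lenI by simp
  also have "\<dots> \<subseteq> P" using I_P s lenI by (auto simp: in_set_conv_nth)
  finally show ?thesis .
qed

end

context inst
begin

lemma mod0_phase: "s mod L = 0 \<Longrightarrow> s = (s div L) * L"
  by (metis add.right_neutral mult.commute mult_div_mod_eq)

lemma phase_of: "p * L \<le> i \<Longrightarrow> i < Suc p * L \<Longrightarrow> i div L = p"
  using L_gt by (metis add.commute div_nat_eqI mult.commute mult_Suc)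

lemma D3: "s < N * L \<Longrightarrow> ev s \<Longrightarrow> s mod L = 0"
proof (induction s rule: less_induct)
  case (less s)
  show ?case
  proof (rule ccontr)
    assume r0: "s mod L \<noteq> 0"
    define p where "p = s div L"
    have d1: "s = p * L + s mod L" unfolding p_def by simp
    have d2: "p < N" using divmod[OF less.prems(1)] unfolding p_def by (elim conjE)
    have d3: "s mod L < L" using divmod[OF less.prems(1)] by (elim conjE)
    note d = d1 d2 d3
    define q where "q = I ! s"
    have qS: "q \<in> Sp p" unfolding q_def p_def using I_in[OF less.prems(1)] .
    have evq: "q \<notin> C s" "\<not> card (C s) < k" using less.prems(2) unfolding evs_def[OF k tie] q_def by auto
    have slen: "s < length I" using less.prems(1) lenI by simp
    have pLs: "p * L < s" using d r0 by linarith
    show False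
    proof (cases "\<exists>i<s. I ! i = q")
      case True
      define i where "i = Max {i. i < s \<and> I ! i = q}"
      have fin: "finite {i. i < s \<and> I ! i = q}" by simp
      have ne: "{i. i < s \<and> I ! i = q} \<noteq> {}" using True by auto
      have i: "i < s" "I ! i = q" using Max_in[OF fin ne] unfolding i_def by auto
      have imax: "\<And>j. i < j \<Longrightarrow> j < s \<Longrightarrow> I ! j \<noteq> q"
        using Max_ge[OF fin] unfolding i_def by (metis (mono_tags, lifting) mem_Collect_eq not_le)
      have qi: "q \<in> C (Suc i)" using lfd_req[OF k tie, of I i] i by simp
      obtain s' where s': "Suc i \<le> s'" "s' < s" "q \<in> C s'" "q \<notin> C (Suc s')"
        using lfd_first_leave[OF k tie qi evq(1)] i by auto
      have lv: "ev s' \<and> q = victim tie I s' (C s') \<and> q \<noteq> I ! s'" using lfd_leave[OF k tie s'(3,4)] .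
      have s'len: "s' < N * L" using s' less.prems by simp
      have s'm: "s' mod L = 0" using less.IH[OF s'(2) s'len] lv by simp
      define p' where "p' = s' div L"
      have s'eq: "s' = p' * L" using mod0_phase[OF s'm] p'_def by simp
      have p'N: "p' < N" using divmod[OF s'len] p'_def by simp
      have p'p: "p' \<le> p" using s' d unfolding p'_def p_def by (simp add: div_le_mono)
      have p'eq: "p' = p"
      proof (rule ccontr)
        assume "p' \<noteq> p"
        then have lt: "p' < p" using p'p by simp
        show False
        proof (cases "q \<in> Sp p'")
          case True
          from final_occ[OF p'N True] obtain t where t: "t < k" "I ! (p' * L + (L - k) + t) = q" by blast
          have "p' * L + (L - k) + t < Suc p' * L" using final_pos[OF t(1)] by simp
          also have "Suc p' * L \<le> p * L" using lt by (intro mult_le_mono1) simp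
          finally have "p' * L + (L - k) + t < s" using pLs by simp
          moreover have "i < p' * L + (L - k) + t" using final_pos[OF t(1), of p'] s' s'eq by simp
          ultimately show False using imax t(2) by blast
        next
          case False
          have Sp1: "0 < Suc p'" "Suc p' < N" using lt d by auto
          have "q \<in> P" using qS Sp_fin[OF d(2)] by auto
          then have "q = hd (XS ! Suc p')" using P_eq[OF Sp1] False by auto
          then have qpos: "I ! (Suc p' * L) = q" using I_forced[OF Sp1(2)] by simp
          have "Suc p' * L \<le> p * L" using lt by (intro mult_le_mono1) simp
          then have "Suc p' * L < s" using pLs by simp
          moreover have "i < Suc p' * L" using s' s'eq by simp
          ultimately show False using imax qpos by blast
        qed
      qed
      have s'p: "s' = p * L" using s'eq p'eq by simp
      have Cs'P: "C s' \<subseteq> P" using C_sub s'len by simp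
      have hdS: "I ! s' = hd (XS ! p)" using I_forced[OF d(2)] s'p by simp
      have hdP: "I ! s' \<in> P" using I_P[OF s'len] .
      have nC: "I ! s' \<notin> C s'" "\<not> card (C s') < k" using lv unfolding evs_def[OF k tie] by auto
      have Ceq: "C s' = P - {I ! s'}"
      proof (rule card_seteq)
        show "finite (P - {I ! s'})" using P by simp
        show "C s' \<subseteq> P - {I ! s'}" using Cs'P nC by auto
        show "card (P - {I ! s'}) \<le> card (C s')" using nC hdP P by simp
      qed
      obtain ov where ov: "P - Sp p = {ov}" using o_ex[OF d(2)] by blast
      have ovC: "ov \<in> C s'" using ov hd_in[OF d(2)] hdS Ceq by auto
      have qlater: "q \<in> set (drop (Suc s') I)" unfolding in_set_drop_iff using s' slen q_def by blast
      have finC: "finite (C s')" using lfd_fin[OF k tie] by blast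
      show False
      proof (cases "\<forall>q'\<in>C s'. q' \<in> set (drop (Suc s') I)")
        case False
        then obtain q' where "q' \<in> C s'" "q' \<notin> set (drop (Suc s') I)" by blast
        from victim_F[OF tie finC this] lv qlater show False by simp
      next
        case True
        have "next_req I s' ov \<le> next_req I s' (victim tie I s' (C s'))"
          by (rule victim_max[OF finC _ True ovC]) (use ovC in auto)
        then have le1: "next_req I s' ov \<le> next_req I s' q" using lv by simp
        have le2: "next_req I s' q \<le> s" using next_req_le[OF s'(2) slen] q_def by simp
        have ge: "Suc p * L \<le> next_req I s' ov"
        proof (rule next_req_ge)
          have ovl: "ov \<in> set (drop (Suc s') I)" using True ovC by blast
          show "\<exists>t>s'. t < length I \<and> I ! t = ov" using ovl[unfolded in_set_drop_iff] by blast
          fix t assume t: "s' < t" "t < length I" "I ! t = ov"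
          show "Suc p * L \<le> t"
          proof (rule ccontr)
            assume a: "\<not> Suc p * L \<le> t"
            have "p * L \<le> t" using t(1) s'p by simp
            moreover have "t < Suc p * L" using a by simp
            ultimately have "t div L = p" by (rule phase_of)
            then have "I ! t \<in> Sp p" using I_in[of t] t lenI by simp
            then show False using t ov by auto
          qed
        qed
        have "s < Suc p * L" using d by simp
        then show False using le1 le2 ge by simp
      qed
    next
      case False
      have Csub: "C s \<subseteq> set (take s I)" using lfd_sub_take[OF k tie] slen by simp
      have qP: "q \<in> P" using qS Sp_fin[OF d(2)] by auto
      show False
      proof (cases "p = 0")
        case True
        have "set (take s I) \<subseteq> Sp 0 - {q}"
        proof
          fix x assume "x \<in> set (take s I)"
          then obtain j where j: "j < s" "I ! j = x" by (auto simp: in_set_conv_nth)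
          have "j div L = 0" using j d True by (simp add: div_less)
          then have "x \<in> Sp 0" using I_in[of j] j less.prems by simp
          moreover have "x \<noteq> q" using False j by auto
          ultimately show "x \<in> Sp 0 - {q}" by simp
        qed
        then have "card (C s) \<le> card (Sp 0 - {q})" using Csub Sp_fin[OF d(2)] True
          by (intro card_mono) auto
        also have "\<dots> < k" using qS True Sp_fin[OF d(2)] k by (simp add: card_Diff1_less)
        finally show False using evq by simp
      next
        case pn0: False
        have Pe: "P = insert (hd (XS!p)) (Sp (p-1))" using P_eq[of p] pn0 d by auto
        show False
        proof (cases "q = hd (XS ! p)")
          case True
          then have "I ! (p * L) = q" using I_forced[OF d(2)] by simp
          then show False using False pLs by blast
        next
          case qh: False
          then have "q \<in> Sp (p-1)" using Pe qP by auto
          moreover have "p - 1 < N" using d by simp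
          ultimately obtain t where t: "t < k" "I ! ((p-1) * L + (L - k) + t) = q" using final_occ by blast
          have "(p-1) * L + (L - k) + t < Suc (p-1) * L" using final_pos[OF t(1)] by simp
          then have "(p-1) * L + (L - k) + t < s" using pLs pn0 by simp
          then show False using False t by blast
        qed
      qed
    qed
  qed
qed

end

context inst
begin

lemma ev_iff: "ev s \<longleftrightarrow> I!s \<notin> C s \<and> \<not> card (C s) < k"
  using evs_def[OF k tie] by blast

lemma ev_phase: "s < N * L \<Longrightarrow> ev s \<Longrightarrow> s = (s div L) * L \<and> s div L < N"
proof -
  assume a: "s < N * L" "ev s"
  have "s mod L = 0" by (rule D3[OF a])
  then have "s = s div L * L" by (rule mod0_phase)
  moreover have "s div L < N" using divmod[OF a(1)] by (elim conjE)
  ultimately show ?thesis by simp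
qed

lemma evs_count: "card {s. s < N * L \<and> ev s} \<le> N"
proof -
  have "{s. s < N * L \<and> ev s} \<subseteq> (\<lambda>p. p * L) ` {..<N}"
  proof
    fix s assume "s \<in> {s. s < N * L \<and> ev s}"
    then have "s = (s div L) * L \<and> s div L < N" using ev_phase by blast
    then show "s \<in> (\<lambda>p. p * L) ` {..<N}" by (metis imageI lessThan_iff)
  qed
  then have "card {s. s < N * L \<and> ev s} \<le> card ((\<lambda>p. p * L) ` {..<N})" by (rule card_mono[rotated]) simp
  also have "\<dots> \<le> N" using card_image_le[of "{..<N}" "\<lambda>p. p * L"] by simp
  finally show ?thesis .
qed

lemma opt_bound: "opt k I \<le> k + N"
  using opt_le_k_evs[OF k tie, where I=I] evs_count lenI by simp

lemma not_ev_inside: "p * L < t \<Longrightarrow> t < Suc p * L \<Longrightarrow> Suc p \<le> N \<Longrightarrow> \<not> ev t"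
proof
  assume a: "p * L < t" "t < Suc p * L" "Suc p \<le> N" "ev t"
  have tN: "t < N * L" using a(2,3) by (meson less_le_trans mult_le_mono1)
  have "t div L = p" using phase_of[of p t] a by simp
  then show False using ev_phase[OF tN a(4)] a(1) by simp
qed

lemma pstar_final:
  assumes i: "i < N * L" and ps: "discard_pstar k tie I i"
  shows "L - k \<le> i mod L \<and> i div L + 1 < N"
proof -
  from pstar_evict[OF k tie ps] i lenI obtain s where s: "i < s" "s < next_or_end I i" "ev s"
    "I!i = victim tie I s (C s)" by auto
  have sN: "s < N * L" using s(2) ne_le[OF k tie, where I=I and i=i] lenI by simp
  define p where "p = s div L"
  have sp: "s = p * L" "p < N" using ev_phase[OF sN s(3)] p_def by auto
  have p0: "0 < p" using sp s(1) by (cases p) auto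
  have nC: "I ! s \<notin> C s" "\<not> card (C s) < k" using s(3) ev_iff by auto
  have ne: "C s \<noteq> {}" using nC(2) k by auto
  have vC: "I ! i \<in> C s" using s(4) victim_in[OF tie _ ne] lfd_fin[OF k tie] by auto
  have "I ! i \<in> P" using vC C_sub[of s] sN by auto
  moreover have "I ! i \<noteq> hd (XS ! p)" using vC nC I_forced[OF sp(2)] sp by auto
  ultimately have vS: "I ! i \<in> Sp (p - 1)" using P_eq[OF p0 sp(2)] by auto
  have p1N: "p - 1 < N" using sp by simp
  from final_occ[OF p1N vS] obtain t where t: "t < k" "I ! ((p-1) * L + (L - k) + t) = I ! i" by blast
  define pos where "pos = (p-1) * L + (L - k) + t"
  have pos1: "pos < p * L" using final_pos[OF t(1), of "p-1"] p0 unfolding pos_def by simp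
  have "\<not> i < pos"
  proof
    assume "i < pos"
    moreover have "pos < next_or_end I i" using pos1 sp s(2) by simp
    ultimately show False using ne_between[OF k tie, where I=I and i=i and j=pos] t(2) pos_def by simp
  qed
  then have ipos: "pos \<le> i" by simp
  have "i div L = p - 1" using phase_of[of "p-1" i] ipos pos1 s(1) sp p0 unfolding pos_def by simp
  moreover have "(p-1) * L + (L - k) \<le> i" using ipos unfolding pos_def by simp
  ultimately show ?thesis using sp p0 by (metis add_le_cancel_left div_mult_mod_eq le_add_diff_inverse2 Suc_pred' Suc_eq_plus1)
qed

lemma pstar_count: "card {i. i < N * L \<and> discard_pstar k tie I i} \<le> N"
proof -
  define A where "A = {i. i < N * L \<and> discard_pstar k tie I i}"
  define g where "g i = (SOME s. i < s \<and> s < next_or_end I i \<and> ev s \<and> I!i = victim tie I s (C s))" for i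
  have gp: "i < g i \<and> g i < next_or_end I i \<and> ev (g i) \<and> I!i = victim tie I (g i) (C (g i))" if "i \<in> A" for i
  proof -
    have "\<exists>s. i < s \<and> s < next_or_end I i \<and> ev s \<and> I!i = victim tie I s (C s)"
      using pstar_evict[OF k tie] that lenI unfolding A_def by auto
    then show ?thesis unfolding g_def by (rule someI_ex)
  qed
  have gN: "g i \<in> {s. s < N * L \<and> ev s}" if "i \<in> A" for i
    using gp[OF that] ne_le[OF k tie, where I=I and i=i] lenI by auto
  have inj: "inj_on g A"
  proof (rule inj_onI)
    fix i j assume ij: "i \<in> A" "j \<in> A" "g i = g j"
    show "i = j"
    proof (rule ccontr)
      assume "i \<noteq> j"
      then consider "i < j" | "j < i" by linarith
      then show False
      proof cases
        case 1
        have "I ! i = I ! j" using gp[OF ij(1)] gp[OF ij(2)] ij(3) by simp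
        moreover have "j < next_or_end I i" using gp[OF ij(1)] gp[OF ij(2)] ij(3) by simp
        ultimately show False using ne_between[OF k tie, where I=I and i=i and j=j] 1 by simp
      next
        case 2
        have "I ! i = I ! j" using gp[OF ij(1)] gp[OF ij(2)] ij(3) by simp
        moreover have "i < next_or_end I j" using gp[OF ij(1)] gp[OF ij(2)] ij(3) by simp
        ultimately show False using ne_between[OF k tie, where I=I and i=j and j=i] 2 by simp
      qed
    qed
  qed
  have "card A \<le> card {s. s < N * L \<and> ev s}"
    by (rule card_inj_on_le[OF inj]) (use gN in auto)
  then show ?thesis using evs_count unfolding A_def by simp
qed

lemma pstar_lower:
  assumes p: "0 < p" "p < N"
  shows "\<exists>i. (p-1) * L + (L - k) \<le> i \<and> i < p * L \<and> discard_pstar k tie I i"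
proof -
  define s where "s = p * L"
  have p1N: "p - 1 < N" using p by simp
  have sN: "s < N * L" using p L_gt unfolding s_def by simp
  have sub: "Sp (p-1) \<subseteq> C s"
  proof
    fix v assume v: "v \<in> Sp (p-1)"
    from final_occ[OF p1N v] obtain t where t: "t < k" "I ! ((p-1) * L + (L - k) + t) = v" by blast
    define pos where "pos = (p-1) * L + (L - k) + t"
    have pos: "(p-1) * L < pos" "pos < p * L" using final_pos[OF t(1), of "p-1"] p unfolding pos_def by auto
    have "v \<in> C (Suc pos)" using lfd_req[OF k tie, of I pos] t(2) unfolding pos_def by simp
    moreover have "\<not> ev t'" if "Suc pos \<le> t'" "t' < s" for t'
      using not_ev_inside[of "p-1" t'] that pos p unfolding s_def by simp
    ultimately show "v \<in> C s" using lfd_stay[OF k tie] pos unfolding s_def by (metis Suc_leI)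
  qed
  have Ceq: "Sp (p-1) = C s"
    by (rule card_seteq) (use sub lfd_fin[OF k tie, of I s] Sp_fin[OF p1N] in auto)
  have hd: "I ! s = hd (XS ! p)" using I_forced[OF p(2)] unfolding s_def by simp
  have evs: "ev s" unfolding ev_iff using Ceq hd P_eq[OF p] Sp_fin[OF p1N] by auto
  define v where "v = victim tie I s (C s)"
  have v: "v \<in> C s" "v \<notin> C (Suc s)" using lfd_evict[OF k tie evs] unfolding v_def by auto
  have vS: "v \<in> Sp (p-1)" using v Ceq by simp
  from final_occ[OF p1N vS] obtain t where t: "t < k" "I ! ((p-1) * L + (L - k) + t) = v" by blast
  define pos where "pos = (p-1) * L + (L - k) + t"
  have pos: "(p-1) * L < pos" "pos < p * L" using final_pos[OF t(1), of "p-1"] p unfolding pos_def by auto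
  have slen: "s < length I" using sN lenI by simp
  have nxt: "s < next_or_end I pos"
  proof (rule ne_gt[OF k tie])
    show "pos < s" using pos s_def by simp
    show "s < length I" by (rule slen)
    fix t' assume t': "pos < t'" "t' \<le> s"
    show "I ! t' \<noteq> I ! pos"
    proof (cases "t' = s")
      case True
      then show ?thesis using hd t(2) vS P_eq[OF p] unfolding pos_def by auto
    next
      case False
      then have t's: "t' < p * L" using t' s_def by simp
      define u where "u = t' - ((p-1) * L + (L - k))"
      have u: "t' = (p-1) * L + (L - k) + u" "u < k" "t < u"
        using t' t's pos p L_gt unfolding u_def pos_def by (auto simp: algebra_simps)
      have "I ! t' = XS ! (p-1) ! u" using I_final[OF p1N u(2)] u(1) by simp
      moreover have "I ! pos = XS ! (p-1) ! t" using I_final[OF p1N t(1)] unfolding pos_def by simp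
      moreover have "XS ! (p-1) ! u \<noteq> XS ! (p-1) ! t"
        using XSp[OF p1N] u t nth_eq_iff_index_eq by fastforce
      ultimately show ?thesis by simp
    qed
  qed
  have "discard_pstar k tie I pos"
    unfolding discard_pstar_def using nxt pos v(2) t(2) unfolding pos_def s_def
    by (intro exI[of _ "Suc (p * L)"]) auto
  then show ?thesis using pos unfolding pos_def by (intro exI[of _ "(p-1) * L + (L - k) + t"]) auto
qed

end

context inst
begin

lemma phase_of': "0 < p \<Longrightarrow> (p-1) * L \<le> i \<Longrightarrow> i < p * L \<Longrightarrow> i div L = p - 1"
  using phase_of[of "p-1" i] by simp

lemma mapfstW: "map fst W = I" unfolding I_def by simp

lemma W_pred: "i < N * L \<Longrightarrow> snd (W ! i) = (m \<and> L - k \<le> i mod L)"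
  by (rule I_snd)

lemma deta_F0: "\<not> m \<Longrightarrow> discard_eta k tie W False \<le> N"
proof -
  assume nm: "\<not> m"
  have "{i. i < length W \<and> snd (W ! i) = False \<and> discard_pstar k tie (map fst W) i = (\<not> False)}
      \<subseteq> {i. i < N * L \<and> discard_pstar k tie I i}" using lenW mapfstW by auto
  then have "discard_eta k tie W False \<le> card {i. i < N * L \<and> discard_pstar k tie I i}"
    unfolding discard_eta_def by (rule card_mono[rotated]) simp
  then show ?thesis using pstar_count by simp
qed

lemma deta_T0: "\<not> m \<Longrightarrow> discard_eta k tie W True = 0"
  unfolding discard_eta_def using W_pred lenW by auto

lemma deta_F1: "m \<Longrightarrow> discard_eta k tie W False = 0"
proof -
  assume mm: m
  have "{i. i < length W \<and> snd (W ! i) = False \<and> discard_pstar k tie (map fst W) i = (\<not> False)} = {}"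
    using W_pred lenW mapfstW pstar_final mm by auto
  then show ?thesis unfolding discard_eta_def by simp
qed

lemma deta_T1: "m \<Longrightarrow> discard_eta k tie W True \<le> (k - 1) * N + 1"
proof -
  assume mm: m
  define Fin where "Fin = {i. i < N * L \<and> L - k \<le> i mod L}"
  define B where "B = {i \<in> Fin. discard_pstar k tie I i}"
  have eq: "{i. i < length W \<and> snd (W ! i) = True \<and> discard_pstar k tie (map fst W) i = (\<not> True)} = Fin - B"
    unfolding Fin_def B_def using W_pred lenW mapfstW mm by auto
  have finF: "finite Fin" unfolding Fin_def by simp
  have cF: "card Fin \<le> N * k"
  proof -
    have "Fin \<subseteq> (\<lambda>(p, t). p * L + (L - k) + t) ` ({..<N} \<times> {..<k})"
    proof
      fix i assume i: "i \<in> Fin"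
      then have d: "i = i div L * L + i mod L" "i div L < N" "i mod L < L" "L - k \<le> i mod L"
        using divmod unfolding Fin_def by auto
      have "i = (\<lambda>(p, t). p * L + (L - k) + t) (i div L, i mod L - (L - k))" using d by simp
      moreover have "i mod L - (L - k) < k" using d(3) d(4) L_gt by linarith
      moreover have "(i div L, i mod L - (L - k)) \<in> {..<N} \<times> {..<k}" using d(2) calculation(2) by auto
      ultimately show "i \<in> (\<lambda>(p, t). p * L + (L - k) + t) ` ({..<N} \<times> {..<k})" by blast
    qed
    then have "card Fin \<le> card ((\<lambda>(p, t). p * L + (L - k) + t) ` ({..<N} \<times> {..<k}))"
      by (rule card_mono[rotated]) simp
    also have "\<dots> \<le> card ({..<N} \<times> {..<k})" by (rule card_image_le) simp
    finally show ?thesis by (simp add: card_cartesian_product)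
  qed
  have cB: "N - 1 \<le> card B"
  proof -
    define f where "f p = (SOME i. (p-1) * L + (L - k) \<le> i \<and> i < p * L \<and> discard_pstar k tie I i)" for p
    have fp: "(p-1) * L + (L - k) \<le> f p \<and> f p < p * L \<and> discard_pstar k tie I (f p)" if "p \<in> {1..<N}" for p
      unfolding f_def by (rule someI_ex) (use pstar_lower that in auto)
    have fB: "f p \<in> B" if "p \<in> {1..<N}" for p
    proof -
      have a: "(p-1) * L + (L - k) \<le> f p" "f p < p * L" "discard_pstar k tie I (f p)" using fp[OF that] by auto
      have "f p < N * L" using a(2) that by (meson atLeastLessThan_iff less_le_trans mult_le_mono1 order.strict_implies_order)
      moreover have "f p div L = p - 1" using phase_of'[of p "f p"] a that by auto
      moreover have "f p = f p div L * L + f p mod L" by simp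
      ultimately have "L - k \<le> f p mod L" using a(1) by (metis add_le_cancel_left)
      then show ?thesis unfolding B_def Fin_def using a \<open>f p < N * L\<close> by auto
    qed
    have inj: "inj_on f {1..<N}"
    proof (rule inj_onI)
      fix p q assume pq: "p \<in> {1..<N}" "q \<in> {1..<N}" "f p = f q"
      have "f p div L = p - 1" using phase_of'[of p "f p"] fp[OF pq(1)] pq(1) by auto
      moreover have "f q div L = q - 1" using phase_of'[of q "f q"] fp[OF pq(2)] pq(2) by auto
      ultimately show "p = q" using pq by auto
    qed
    have "card (f ` {1..<N}) \<le> card B" by (rule card_mono) (use fB finF in \<open>auto simp: B_def\<close>)
    then show ?thesis using card_image[OF inj] by simp
  qed
  have "card (Fin - B) = card Fin - card B" by (rule card_Diff_subset) (use finF in \<open>auto simp: B_def\<close>)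
  then have "card (Fin - B) \<le> N * k - (N - 1)" using cF cB by linarith
  also have "\<dots> \<le> (k - 1) * N + 1" using k by (cases N) (auto simp: algebra_simps)
  finally show ?thesis unfolding discard_eta_def eq .
qed

end

lemma PI1: "set rs \<subseteq> T \<Longrightarrow> S \<subseteq> T \<Longrightarrow> finite T \<Longrightarrow> card T \<le> k \<Longrightarrow>
   phase_ids k S j (rs @ rest) = replicate (length rs) j @ phase_ids k (S \<union> set rs) j rest"
proof (induction rs arbitrary: S)
  case Nil then show ?case by simp
next
  case (Cons r rs)
  have c: "r \<in> S \<or> card S < k"
  proof (cases "r \<in> S")
    case False
    then have "S \<subset> T" using Cons.prems by auto
    then have "card S < card T" by (rule psubset_card_mono[OF Cons.prems(3)])
    then show ?thesis using Cons.prems(4) by simp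
  qed simp
  have "phase_ids k S j ((r # rs) @ rest) = j # phase_ids k (insert r S) j (rs @ rest)" using c by simp
  also have "\<dots> = j # replicate (length rs) j @ phase_ids k (insert r S \<union> set rs) j rest"
    using Cons.IH[of "insert r S"] Cons.prems by simp
  finally show ?case by simp
qed

context inst
begin

definition ph where "ph xs = map fst (gen k m [] xs)"

lemma I_concat: "I = concat (map ph XS)"
  unfolding I_def W_def ph_def by (simp add: map_concat o_def)

lemma ph_props: "length xs = k \<Longrightarrow> ph xs = hd xs # tl (ph xs) \<and> set (ph xs) = set xs \<and> length (ph xs) = L"
proof -
  assume lx: "length xs = k"
  have len: "length (ph xs) = L" unfolding ph_def L_def using gen_len[OF k lx] by simp
  then have ne: "ph xs \<noteq> []" using L_gt by auto
  have "hd (ph xs) = hd xs" using gen_fst_0[OF k lx, of m] ne unfolding ph_def by (simp add: hd_conv_nth)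
  then have "ph xs = hd xs # tl (ph xs)" using ne by (metis list.collapse)
  moreover have "set (ph xs) = set xs" using gen_set[OF k lx, of m] unfolding ph_def by simp
  ultimately show ?thesis using len by blast
qed

lemma PI_phase:
  assumes lx: "length xs = k" "distinct xs"
    and first: "(hd xs \<notin> S \<and> card S = k \<and> finite S \<and> j' = Suc j) \<or> (S = {} \<and> j' = j)"
  shows "phase_ids k S j (ph xs @ rest) = replicate L j' @ phase_ids k (set xs) j' rest"
proof -
  have pp: "ph xs = hd xs # tl (ph xs)" "set (ph xs) = set xs" "length (ph xs) = L" using ph_props[OF lx(1)] by auto
  have step: "phase_ids k S j (hd xs # (tl (ph xs) @ rest)) = j' # phase_ids k {hd xs} j' (tl (ph xs) @ rest)"
    using first k by auto
  have cT: "card (set xs) \<le> k" using distinct_card[OF lx(2)] lx(1) by simp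
  have hs: "hd xs \<in> set xs" using pp(1,2) by (metis list.set_intros(1))
  have ts: "set (tl (ph xs)) \<subseteq> set xs" using pp by (metis list.set_sel(2) subsetI tl_Nil)
  have A: "phase_ids k {hd xs} j' (tl (ph xs) @ rest) = replicate (length (tl (ph xs))) j' @ phase_ids k ({hd xs} \<union> set (tl (ph xs))) j' rest"
    by (rule PI1[OF ts]) (use hs cT in auto)
  have B: "{hd xs} \<union> set (tl (ph xs)) = set xs" using pp by (metis Un_insert_left list.simps(15) sup_bot_left)
  have Cl: "length (tl (ph xs)) = L - 1" using pp by simp
  have e: "ph xs @ rest = hd xs # (tl (ph xs) @ rest)" using pp(1) by (cases "ph xs") auto
  have "phase_ids k S j (ph xs @ rest) = phase_ids k S j (hd xs # (tl (ph xs) @ rest))"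
    by (simp only: e)
  also have "\<dots> = j' # phase_ids k {hd xs} j' (tl (ph xs) @ rest)" by (rule step)
  also have "\<dots> = j' # replicate (L - 1) j' @ phase_ids k (set xs) j' rest" using A B Cl by simp
  finally have D: "phase_ids k S j (ph xs @ rest) = j' # replicate (L - 1) j' @ phase_ids k (set xs) j' rest" .
  moreover have "replicate L j' = j' # replicate (L - 1) j'" using L_gt by (cases L) auto
  ultimately show ?thesis by simp
qed

lemma PI_chain: "chain k P S XS' \<Longrightarrow> finite S \<Longrightarrow> card S = k \<Longrightarrow>
  phase_ids k S j (concat (map ph XS')) = concat (map (\<lambda>q. replicate L (Suc j + q)) [0..<length XS'])"
proof (induction XS' arbitrary: S j)
  case Nil then show ?case by simp
next
  case (Cons xs XS')
  have c: "length xs = k" "distinct xs" "set xs \<subseteq> P" "hd xs \<notin> S" "chain k P (set xs) XS'" using Cons.prems by auto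
  have "phase_ids k S j (concat (map ph (xs # XS'))) = replicate L (Suc j) @ phase_ids k (set xs) (Suc j) (concat (map ph XS'))"
    using PI_phase[OF c(1,2), of S "Suc j" j] c Cons.prems by simp
  also have "\<dots> = replicate L (Suc j) @ concat (map (\<lambda>q. replicate L (Suc (Suc j) + q)) [0..<length XS'])"
    using Cons.IH[OF c(5)] c distinct_card[OF c(2)] by simp
  also have "\<dots> = concat (map (\<lambda>q. replicate L (Suc j + q)) [0..<length (xs # XS')])"
    by (simp only: length_Cons map_upt_Suc) simp
  finally show ?case .
qed

lemma PI_all: "phase_ids k {} 0 I = concat (map (\<lambda>q. replicate L q) [0..<N])"
proof (cases "XS = []")
  case True then show ?thesis unfolding I_concat N_def by simp
next
  case False
  then obtain xs XS' where Cons: "XS = xs # XS'" by (cases XS) auto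
  have c: "length xs = k" "distinct xs" "set xs \<subseteq> P" "chain k P (set xs) XS'" using ch Cons by auto
  have Ie: "I = ph xs @ concat (map ph XS')" using I_concat Cons by simp
  have "phase_ids k {} 0 I = replicate L 0 @ phase_ids k (set xs) 0 (concat (map ph XS'))"
    unfolding Ie using PI_phase[OF c(1,2), of "{}" 0 0] by simp
  also have "\<dots> = replicate L 0 @ concat (map (\<lambda>q. replicate L (Suc q)) [0..<length XS'])"
    using PI_chain[OF c(4)] c distinct_card[OF c(2)] by simp
  also have "\<dots> = concat (map (\<lambda>q. replicate L q) [0..<N])"
  proof -
    have Ne: "N = Suc (length XS')" using Cons unfolding N_def by simp
    show ?thesis unfolding Ne by (simp only: map_upt_Suc) simp
  qed
  finally show ?thesis .
qed

lemma phase_eq: "i < N * L \<Longrightarrow> phase k I i = i div L"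
proof -
  assume i: "i < N * L"
  have d: "i = i div L * L + i mod L" "i div L < N" "i mod L < L" using divmod[OF i] by auto
  have "\<forall>x\<in>set (map (\<lambda>q. replicate L q) [0..<N]). length x = L" by auto
  from concat_unif_nth[OF this, of "i div L" "i mod L"] d(2,3)
  have "concat (map (\<lambda>q. replicate L q) [0..<N]) ! (i div L * L + i mod L) = i div L" by simp
  then have "concat (map (\<lambda>q. replicate L q) [0..<N]) ! i = i div L" by (simp only: div_mult_mod_eq)
  then show ?thesis unfolding phase_def PI_all .
qed

end

context inst
begin

lemma counted_props:
  assumes c: "counted k I i"
  shows "i < N * L \<and> Suc (i div L) < N \<and> L - k \<le> i mod L"
proof -
  from c have i: "i < N * L" and ex: "\<exists>i'<N * L. phase k I i < phase k I i'"
    and nl: "\<not> (\<exists>i'. i < i' \<and> i' < N * L \<and> phase k I i' = phase k I i \<and> I ! i' = I ! i)"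
    unfolding counted_def lenI by auto
  from ex obtain i' where i': "i' < N * L" "i div L < i' div L" using phase_eq i by auto
  have sN: "Suc (i div L) < N" using i' divmod[OF i'(1)] by linarith
  define p where "p = i div L"
  have pN: "p < N" using sN p_def by simp
  have d: "i = p * L + i mod L" "i mod L < L" using divmod[OF i] p_def by auto
  have "L - k \<le> i mod L"
  proof (rule ccontr)
    assume a: "\<not> L - k \<le> i mod L"
    have vS: "I ! i \<in> Sp p" using I_in[OF i] p_def by simp
    from final_occ[OF pN vS] obtain t where t: "t < k" "I ! (p * L + (L - k) + t) = I ! i" by blast
    define pos where "pos = p * L + (L - k) + t"
    have pos: "p * L < pos" "pos < Suc p * L" using final_pos[OF t(1)] pos_def by auto
    have posN: "pos < N * L" using pos(2) pN by (meson less_le_trans mult_le_mono1 Suc_leI)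
    have "i < pos" using a d unfolding pos_def by linarith
    moreover have "phase k I pos = phase k I i"
      using phase_eq[OF posN] phase_eq[OF i] phase_of[of p pos] pos p_def by simp
    ultimately show False using nl posN t(2) pos_def by blast
  qed
  then show ?thesis using i sN by simp
qed

lemma counted_last:
  assumes "counted k I i" "i < i'" "i' < N * L" "i' div L = i div L"
  shows "I ! i' \<noteq> I ! i"
proof -
  have i: "i < N * L" using counted_props[OF assms(1)] by simp
  show ?thesis using assms(1-3) phase_eq[OF assms(3)] phase_eq[OF i] assms(4) unfolding counted_def lenI by auto
qed

lemma pstar_iff:
  assumes c: "counted k I i"
  shows "phase_pstar k I i \<longleftrightarrow> I ! i \<notin> Sp (Suc (i div L))"
proof -
  have cp: "i < N * L" "Suc (i div L) < N" using counted_props[OF c] by auto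
  show ?thesis
  proof
    assume ps: "phase_pstar k I i"
    show "I ! i \<notin> Sp (Suc (i div L))"
    proof
      assume v: "I ! i \<in> Sp (Suc (i div L))"
      from final_occ[OF cp(2) v] obtain t where t: "t < k" "I ! (Suc (i div L) * L + (L - k) + t) = I ! i" by blast
      define pos where "pos = Suc (i div L) * L + (L - k) + t"
      have pos: "Suc (i div L) * L < pos" "pos < Suc (Suc (i div L)) * L" using final_pos[OF t(1)] pos_def by auto
      have posN: "pos < N * L" using pos(2) cp(2) by (meson less_le_trans mult_le_mono1 Suc_leI)
      have "phase k I pos = Suc (phase k I i)"
        using phase_eq[OF posN] phase_eq[OF cp(1)] phase_of[of "Suc (i div L)" pos] pos by simp
      then show False using ps posN t(2) pos_def lenI unfolding phase_pstar_def by auto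
    qed
  next
    assume nv: "I ! i \<notin> Sp (Suc (i div L))"
    show "phase_pstar k I i"
      unfolding phase_pstar_def
    proof
      assume "\<exists>i'<length I. phase k I i' = Suc (phase k I i) \<and> I ! i' = I ! i"
      then obtain i' where i': "i' < N * L" "phase k I i' = Suc (phase k I i)" "I ! i' = I ! i" using lenI by auto
      have "i' div L = Suc (i div L)" using i' phase_eq[OF i'(1)] phase_eq[OF cp(1)] by simp
      then show False using I_in[OF i'(1)] i'(3) nv by simp
    qed
  qed
qed

lemma peta_F0: "\<not> m \<Longrightarrow> phase_eta k W False \<le> N"
proof -
  assume nm: "\<not> m"
  define A where "A = {i. counted k I i \<and> snd (W ! i) = False \<and> phase_pstar k I i = (\<not> False)}"
  have inj: "inj_on (\<lambda>i. i div L) A"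
  proof (rule inj_onI)
    fix i j assume ij: "i \<in> A" "j \<in> A" "i div L = j div L"
    have ci: "counted k I i" "phase_pstar k I i" and cj: "counted k I j" "phase_pstar k I j" using ij unfolding A_def by auto
    have pi: "i < N * L" "Suc (i div L) < N" using counted_props[OF ci(1)] by auto
    have pj: "j < N * L" using counted_props[OF cj(1)] by auto
    obtain ov where ov: "P - Sp (Suc (i div L)) = {ov}" using o_ex[OF pi(2)] by blast
    have "I ! i \<in> Sp (i div L)" using I_in[OF pi(1)] .
    then have vi: "I ! i = ov" using ov pstar_iff[OF ci(1)] ci(2) Sp_fin[of "i div L"] pi by auto
    have "I ! j \<in> Sp (i div L)" using I_in[OF pj] ij(3) by simp
    then have vj: "I ! j = ov" using ov pstar_iff[OF cj(1)] cj(2) Sp_fin[of "i div L"] pi ij(3) by auto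
    show "i = j"
    proof (rule ccontr)
      assume "i \<noteq> j"
      then consider "i < j" | "j < i" by linarith
      then show False
      proof cases
        case 1 then show False using counted_last[OF ci(1) 1 pj] ij(3) vi vj by simp
      next
        case 2 then show False using counted_last[OF cj(1) 2 pi(1)] ij(3) vi vj by simp
      qed
    qed
  qed
  have "A \<subseteq> {i. i < N * L}" using counted_props unfolding A_def by auto
  then have finA: "finite A" by (rule finite_subset) simp
  have "(\<lambda>i. i div L) ` A \<subseteq> {..<N}"
  proof
    fix x assume "x \<in> (\<lambda>i. i div L) ` A"
    then obtain i where "i \<in> A" "x = i div L" by blast
    then show "x \<in> {..<N}" using counted_props[of i] unfolding A_def by auto
  qed
  then have "card ((\<lambda>i. i div L) ` A) \<le> N" by (metis card_lessThan card_mono finite_lessThan)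
  then have "card A \<le> N" using card_image[OF inj] by simp
  then show ?thesis unfolding phase_eta_def A_def mapfstW .
qed

lemma peta_T0: "\<not> m \<Longrightarrow> phase_eta k W True = 0"
proof -
  assume nm: "\<not> m"
  have E: "{i. counted k I i \<and> snd (W ! i) = True \<and> phase_pstar k I i = (\<not> True)} = {}"
  proof (rule ccontr)
    assume "\<not> ?thesis"
    then obtain i where "counted k I i" "snd (W ! i)" by auto
    then show False using counted_props[of i] W_pred[of i] nm by auto
  qed
  show ?thesis unfolding phase_eta_def mapfstW E by simp
qed

lemma peta_F1: "m \<Longrightarrow> phase_eta k W False = 0"
proof -
  assume mm: "m"
  have E: "{i. counted k I i \<and> snd (W ! i) = False \<and> phase_pstar k I i = (\<not> False)} = {}"
  proof (rule ccontr)
    assume "\<not> ?thesis"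
    then obtain i where "counted k I i" "\<not> snd (W ! i)" by auto
    then show False using counted_props[of i] W_pred[of i] mm by auto
  qed
  show ?thesis unfolding phase_eta_def mapfstW E by simp
qed

lemma peta_T1: "m \<Longrightarrow> phase_eta k W True \<le> (k - 1) * N"
proof -
  assume mm: m
  define A where "A = {i. counted k I i \<and> snd (W ! i) = True \<and> phase_pstar k I i = (\<not> True)}"
  define B where "B = Sigma {p. Suc p < N} (\<lambda>p. Sp (Suc p) - {hd (XS ! Suc p)})"
  define g where "g i = (i div L, I ! i)" for i
  have gB: "g i \<in> B" if "i \<in> A" for i
  proof -
    have c: "counted k I i" "\<not> phase_pstar k I i" using that unfolding A_def by auto
    have cp: "i < N * L" "Suc (i div L) < N" using counted_props[OF c(1)] by auto
    have v1: "I ! i \<in> Sp (Suc (i div L))" using pstar_iff[OF c(1)] c(2) by simp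
    have "hd (XS ! Suc (i div L)) \<notin> Sp (i div L)" using P_eq[of "Suc (i div L)"] cp by simp
    moreover have "I ! i \<in> Sp (i div L)" using I_in[OF cp(1)] .
    ultimately show ?thesis unfolding B_def g_def using v1 cp by auto
  qed
  have inj: "inj_on g A"
  proof (rule inj_onI)
    fix i j assume ij: "i \<in> A" "j \<in> A" "g i = g j"
    have c: "counted k I i" "counted k I j" using ij unfolding A_def by auto
    have e: "i div L = j div L" "I ! i = I ! j" using ij(3) unfolding g_def by auto
    have N: "i < N * L" "j < N * L" using counted_props c by auto
    show "i = j"
    proof (rule ccontr)
      assume "i \<noteq> j"
      then consider "i < j" | "j < i" by linarith
      then show False
      proof cases
        case 1 then show False using counted_last[OF c(1) 1 N(2)] e by simp
      next
        case 2 then show False using counted_last[OF c(2) 2 N(1)] e by simp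
      qed
    qed
  qed
  have finP: "finite {p. Suc p < N}" by (rule finite_subset[of _ "{..<N}"]) auto
  have finB: "finite B" unfolding B_def using Sp_fin finP by (intro finite_SigmaI) auto
  have "card A = card (g ` A)" using card_image[OF inj] by simp
  also have "\<dots> \<le> card B" using gB finB by (intro card_mono) auto
  also have "card B = (\<Sum>p\<in>{p. Suc p < N}. card (Sp (Suc p) - {hd (XS ! Suc p)}))"
    unfolding B_def by (rule card_SigmaI[OF finP]) (use Sp_fin in auto)
  also have "\<dots> = (\<Sum>p\<in>{p. Suc p < N}. k - 1)"
  proof (rule sum.cong)
    fix p assume "p \<in> {p. Suc p < N}"
    then have "Suc p < N" by simp
    then show "card (Sp (Suc p) - {hd (XS ! Suc p)}) = k - 1"
      using hd_in[of "Suc p"] Sp_fin[of "Suc p"] by (simp add: card_Diff_singleton)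
  qed simp
  also have "\<dots> = card {p. Suc p < N} * (k - 1)" by simp
  also have "\<dots> \<le> N * (k - 1)"
  proof -
    have "card {p. Suc p < N} \<le> card {..<N}" by (intro card_mono) auto
    then show ?thesis by simp
  qed
  finally show ?thesis unfolding phase_eta_def A_def mapfstW by (simp add: mult.commute)
qed

end

lemma final_contra:
  fixes eta :: "('p \<times> bool) list \<Rightarrow> bool \<Rightarrow> nat" and R :: "'p ralg"
  assumes R: "valid_alg k R" and comp: "competitive k eta R \<alpha> \<beta> \<gamma>" and k: "1 \<le> k"
    and P: "finite P" "card P = Suc k" and S0: "S0 \<subseteq> P" "card S0 = k"
    and ab: "\<alpha> + \<beta> < harm k \<or> \<alpha> + (real k - 1) * \<gamma> < harm k"
    and H: "\<And>m XS. chain k P S0 XS \<Longrightarrow>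
      opt k (map fst (gen k m [] (concat XS))) \<le> k + length XS \<and>
      (\<not> m \<longrightarrow> eta (gen k m [] (concat XS)) False \<le> length XS \<and> eta (gen k m [] (concat XS)) True = 0) \<and>
      (m \<longrightarrow> eta (gen k m [] (concat XS)) False = 0 \<and> eta (gen k m [] (concat XS)) True \<le> (k - 1) * length XS + 1)"
  shows False
proof -
  from comp have nn: "\<alpha> \<ge> 0" "\<beta> \<ge> 0" "\<gamma> \<ge> 0" unfolding competitive_def by auto
  from comp obtain b where b: "\<And>xs. alg_cost R xs \<le> \<alpha> * real (opt k (map fst xs))
      + \<beta> * real (eta xs False) + \<gamma> * real (eta xs True) + b"
    unfolding competitive_def by blast
  define m where "m = (\<not> \<alpha> + \<beta> < harm k)"
  define c where "c = (if m then \<alpha> + (real k - 1) * \<gamma> else \<alpha> + \<beta>)"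
  have cH: "c < harm k" using ab unfolding c_def m_def by auto
  obtain N :: nat where N: "(\<alpha> * real k + \<gamma> + b) / (harm k - c) < real N"
    using reals_Archimedean2 by blast
  have Nc: "\<alpha> * real k + \<gamma> + b < real N * (harm k - c)"
    using N cH by (simp add: pos_divide_less_eq mult.commute)
  from LB_main[OF R P k S0, of N m] obtain cs where cs: "length cs = N * k" "vc k P S0 [] cs"
    "real N * harm k \<le> alg_cost R (gen k m [] cs)" by blast
  from vc_chain[OF k cs(1,2)] obtain XS where XS: "cs = concat XS" "length XS = N" "chain k P S0 XS" by blast
  define W where "W = gen k m [] (concat XS)"
  have Hx: "opt k (map fst W) \<le> k + N"
    "\<not> m \<longrightarrow> eta W False \<le> N \<and> eta W True = 0"
    "m \<longrightarrow> eta W False = 0 \<and> eta W True \<le> (k - 1) * N + 1"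
    using H[OF XS(3), of m] XS(2) unfolding W_def by auto
  have main: "real N * harm k \<le> \<alpha> * real (opt k (map fst W)) + \<beta> * real (eta W False) + \<gamma> * real (eta W True) + b"
    using cs(3) b[of W] XS(1) unfolding W_def by simp
  have o: "\<alpha> * real (opt k (map fst W)) \<le> \<alpha> * (real k + real N)"
    using Hx(1) nn(1) by (intro mult_left_mono) auto
  show False
  proof (cases m)
    case False
    have e1: "\<beta> * real (eta W False) \<le> \<beta> * real N" using Hx(2) False nn(2) by (intro mult_left_mono) auto
    have e2: "\<gamma> * real (eta W True) = 0" using Hx(2) False by simp
    have "real N * (harm k - c) = real N * harm k - (\<alpha> * real N + \<beta> * real N)"
      using False unfolding c_def by (simp add: algebra_simps)
    then show False using main o e1 e2 Nc nn by (simp add: algebra_simps)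
  next
    case True
    have e1: "\<beta> * real (eta W False) = 0" using Hx(3) True by simp
    have "real (eta W True) \<le> real ((k - 1) * N + 1)" using Hx(3) True by (simp only: of_nat_le_iff)
    also have "\<dots> = (real k - 1) * real N + 1" using k by (simp add: of_nat_diff)
    finally have e2: "\<gamma> * real (eta W True) \<le> \<gamma> * ((real k - 1) * real N + 1)"
      using nn(3) by (intro mult_left_mono) auto
    have "real N * (harm k - c) = real N * harm k - (\<alpha> * real N + \<gamma> * ((real k - 1) * real N))"
      using True unfolding c_def by (simp add: algebra_simps)
    then show False using main o e1 e2 Nc nn by (simp add: algebra_simps)
  qed
qed

theorem theorem6:
  fixes k :: nat
    and tie :: "'p list \<Rightarrow> nat \<Rightarrow> 'p set \<Rightarrow> 'p"
  assumes "k \<ge> 1"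
    and "infinite (UNIV :: 'p set) \<or> k < card (UNIV :: 'p set)"
    and "valid_tie tie"
  shows "(\<forall>(R :: 'p ralg) \<alpha> \<beta> \<gamma>. valid_alg k R \<and> (\<alpha> + \<beta> < harm k \<or> \<alpha> + (real k - 1) * \<gamma> < harm k)
            \<longrightarrow> \<not> competitive k (discard_eta k tie) R \<alpha> \<beta> \<gamma>)
       \<and> (\<forall>(R :: 'p ralg) \<alpha> \<beta> \<gamma>. valid_alg k R \<and> (\<alpha> + \<beta> < harm k \<or> \<alpha> + (real k - 1) * \<gamma> < harm k)
            \<longrightarrow> \<not> competitive k (phase_eta k) R \<alpha> \<beta> \<gamma>)"
proof -
  have k: "1 \<le> k" using assms(1) .
  obtain P :: "'p set" where P: "finite P" "card P = Suc k"
  proof (cases "finite (UNIV :: 'p set)")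
    case True
    then have "Suc k \<le> card (UNIV :: 'p set)" using assms(2) by simp
    then obtain T :: "'p set" where "T \<subseteq> UNIV" "card T = Suc k" "finite T"
      by (rule obtain_subset_with_card_n)
    then show ?thesis using that by blast
  next
    case False
    then obtain T :: "'p set" where "finite T" "card T = Suc k" "T \<subseteq> UNIV"
      using infinite_arbitrarily_large by blast
    then show ?thesis using that by blast
  qed
  obtain S0 where S0: "S0 \<subseteq> P" "card S0 = k"
  proof -
    have "k \<le> card P" using P by simp
    then obtain T where "T \<subseteq> P" "card T = k" "finite T" by (rule obtain_subset_with_card_n)
    then show ?thesis using that by blast
  qed
  have Wc: "inst.W k XS m = gen k m [] (concat XS)" if "chain k P S0 XS" for XS m
  proof -
    interpret inst k P S0 XS tie m using k P S0 that assms(3) by unfold_locales auto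
    have "\<forall>xs\<in>set XS. length xs = k" using chain_len[OF that] by blast
    from gen_concat[OF k this, of m] show ?thesis unfolding W_def by simp
  qed
  have D: "\<not> competitive k (discard_eta k tie) R \<alpha> \<beta> \<gamma>"
    if R: "valid_alg k R" and ab: "\<alpha> + \<beta> < harm k \<or> \<alpha> + (real k - 1) * \<gamma> < harm k" for R :: "'p ralg" and \<alpha> \<beta> \<gamma>
  proof
    assume comp: "competitive k (discard_eta k tie) R \<alpha> \<beta> \<gamma>"
    show False
    proof (rule final_contra[OF R comp k P S0 ab])
      fix m XS assume ch: "chain k P S0 XS"
      interpret inst k P S0 XS tie m using k P S0 ch assms(3) by unfold_locales auto
      have WW: "gen k m [] (concat XS) = W" using Wc[OF ch] by simp
      show "opt k (map fst (gen k m [] (concat XS))) \<le> k + length XS \<and>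
        (\<not> m \<longrightarrow> discard_eta k tie (gen k m [] (concat XS)) False \<le> length XS \<and> discard_eta k tie (gen k m [] (concat XS)) True = 0) \<and>
        (m \<longrightarrow> discard_eta k tie (gen k m [] (concat XS)) False = 0 \<and> discard_eta k tie (gen k m [] (concat XS)) True \<le> (k - 1) * length XS + 1)"
        unfolding WW using opt_bound deta_F0 deta_T0 deta_F1 deta_T1 unfolding I_def N_def by auto
    qed
  qed
  have Ph: "\<not> competitive k (phase_eta k) R \<alpha> \<beta> \<gamma>"
    if R: "valid_alg k R" and ab: "\<alpha> + \<beta> < harm k \<or> \<alpha> + (real k - 1) * \<gamma> < harm k" for R :: "'p ralg" and \<alpha> \<beta> \<gamma>
  proof
    assume comp: "competitive k (phase_eta k) R \<alpha> \<beta> \<gamma>"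
    show False
    proof (rule final_contra[OF R comp k P S0 ab])
      fix m XS assume ch: "chain k P S0 XS"
      interpret inst k P S0 XS tie m using k P S0 ch assms(3) by unfold_locales auto
      have WW: "gen k m [] (concat XS) = W" using Wc[OF ch] by simp
      have T1: "m \<Longrightarrow> phase_eta k W True \<le> (k - 1) * N + 1" using peta_T1 by fastforce
      show "opt k (map fst (gen k m [] (concat XS))) \<le> k + length XS \<and>
        (\<not> m \<longrightarrow> phase_eta k (gen k m [] (concat XS)) False \<le> length XS \<and> phase_eta k (gen k m [] (concat XS)) True = 0) \<and>
        (m \<longrightarrow> phase_eta k (gen k m [] (concat XS)) False = 0 \<and> phase_eta k (gen k m [] (concat XS)) True \<le> (k - 1) * length XS + 1)"
        unfolding WW using opt_bound peta_F0 peta_T0 peta_F1 T1 unfolding I_def N_def by auto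
    qed
  qed
  show ?thesis using D Ph by blast
qed

end
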